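(* Consider Bernoulli bond percolation on a transitive weighted graph at parameter $\beta>0$, and let $K$ denote the cluster of a fixed vertex. For each integer $p\ge2$, \[\mathbb E_\beta|K|^p\le(2p-3)!!\,(\mathbb E_\beta|K|^2)^k(\mathbb E_\beta|K|)^{2p-1-3k}\] for every integer $0\le k\le\lceil\frac{p-1}{2}\rceil$.
   Context: A weighted graph $G=(V,E,J)$ has edge weights $J:E\to[0,\infty)$; Bernoulli bond percolation at parameter $\beta$ declares each edge $e$ open independently with probability $1-e^{-\beta J(e)}$, with law $\mathbb{P}_\beta$ and expectation $\mathbb E_\beta$. Transitive means the automorphism group (preserving weights) acts transitively on vertices, so the law of $|K_v|$ does not depend on $v$. $(2p-3)!!$ is the product of odd integers up to $2p-3$. *)

theory Defs
  imports "HOL-Probability.Probability"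
begin

text \<open>Edges are the two-element sets {x,y}; a pair of weight 0
  is never open, so it is equivalent to the absence of an edge.\<close>

definition weighted_graph :: "('v \<Rightarrow> 'v \<Rightarrow> real) \<Rightarrow> bool" where
  "weighted_graph J \<longleftrightarrow> (\<forall>x y. J x y \<ge> 0 \<and> J x y = J y x)"

definition edges :: "'v set set" where
  "edges = {e. \<exists>x y. x \<noteq> y \<and> e = {x, y}}"

definition edge_weight :: "('v \<Rightarrow> 'v \<Rightarrow> real) \<Rightarrow> 'v set \<Rightarrow> real" where
  "edge_weight J e = (THE w. \<exists>x y. x \<noteq> y \<and> e = {x, y} \<and> w = J x y)"

definition transitive_wgraph :: "('v \<Rightarrow> 'v \<Rightarrow> real) \<Rightarrow> bool" where
  "transitive_wgraph J \<longleftrightarrow>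
     (\<forall>x y. \<exists>\<phi>. bij \<phi> \<and> (\<forall>a b. J (\<phi> a) (\<phi> b) = J a b) \<and> \<phi> x = y)"

definition perc :: "real \<Rightarrow> ('v \<Rightarrow> 'v \<Rightarrow> real) \<Rightarrow> ('v set \<Rightarrow> bool) measure" where
  "perc \<beta> J = (\<Pi>\<^sub>M e\<in>edges. measure_pmf (bernoulli_pmf (1 - exp (- \<beta> * edge_weight J e))))"

definition open_edge :: "('v set \<Rightarrow> bool) \<Rightarrow> 'v \<Rightarrow> 'v \<Rightarrow> bool" where
  "open_edge \<omega> x y \<longleftrightarrow> x \<noteq> y \<and> \<omega> {x, y}"

definition cluster :: "('v set \<Rightarrow> bool) \<Rightarrow> 'v \<Rightarrow> 'v set" where
  "cluster \<omega> v = {w. (open_edge \<omega>)\<^sup>*\<^sup>* v w}"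

definition cluster_size :: "('v set \<Rightarrow> bool) \<Rightarrow> 'v \<Rightarrow> ennreal" where
  "cluster_size \<omega> v = (if finite (cluster \<omega> v) then ennreal (real (card (cluster \<omega> v))) else \<infinity>)"

text \<open>(2p-3)!! = 1 * 3 * ... * (2p-3) for p \<ge> 2.\<close>
definition odd_dfact :: "nat \<Rightarrow> nat" where
  "odd_dfact p = (\<Prod>i<p - 1. 2 * i + 1)"

end

theory Submission
  imports Defs
begin

lemma odd_dfact_Suc_Suc: "odd_dfact (Suc (Suc n)) = odd_dfact (Suc n) * (2*n+1)"
  by (simp add: odd_dfact_def)

lemma odd_dfact_1 [simp]: "odd_dfact 1 = 1" and odd_dfact_2 [simp]: "odd_dfact 2 = 1"
  by (simp_all add: odd_dfact_def)

lemma odd_dfact_pos: "odd_dfact n > 0"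
  by (simp add: odd_dfact_def)

lemma prod_odd_aux: "(\<Prod>i<Suc n. (2 * real i - 1)) = - real (odd_dfact (Suc n))"
proof (induction n)
  case 0 then show ?case by (simp add: odd_dfact_def)
next
  case (Suc n)
  have "(\<Prod>i<Suc (Suc n). (2 * real i - 1)) = (\<Prod>i<Suc n. (2 * real i - 1)) * (2 * real (Suc n) - 1)"
    by simp
  also have "\<dots> = - real (odd_dfact (Suc n)) * (2 * real n + 1)" using Suc by simp
  also have "\<dots> = - real (odd_dfact (Suc (Suc n)))" by (simp only: odd_dfact_Suc_Suc of_nat_mult) simp
  finally show ?case .
qed

definition hh :: "nat \<Rightarrow> real" where "hh n = ((1/2::real) gchoose n) * (-2) ^ n * fact n"

lemma hh_eq: "hh n = (\<Prod>i<n. (2 * real i - 1))"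
proof -
  have "hh n = (-2) ^ n * (fact n * ((1/2::real) gchoose n))" by (simp add: hh_def algebra_simps)
  also have "\<dots> = (-2) ^ n * (\<Prod>i = 0..<n. (1/2::real) - of_nat i)" by (simp add: gbinomial_mult_fact)
  also have "\<dots> = (\<Prod>i<n. (-2) * ((1/2::real) - of_nat i))"
    by (simp only: prod.distrib atLeast0LessThan prod_constant card_lessThan)
  also have "\<dots> = (\<Prod>i<n. (2 * real i - 1))" by (intro prod.cong) (auto simp: algebra_simps)
  finally show ?thesis .
qed

lemma hh_0: "hh 0 = 1" by (simp add: hh_eq)

lemma hh_pos: "n \<ge> 1 \<Longrightarrow> hh n = - real (odd_dfact n)"
  using prod_odd_aux[of "n - 1"] by (simp add: hh_eq)

lemma conv_zero:
  assumes "n \<ge> 2"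
  shows "(\<Sum>k=0..n. real (n choose k) * hh k * hh (n - k)) = 0"
proof -
  have one: "(1::real) gchoose n = 0"
    using binomial_gbinomial[of 1 n, where 'a=real] assms by (simp add: binomial_eq_0)
  have "(\<Sum>k=0..n. ((1/2::real) gchoose k) * ((1/2) gchoose (n - k))) = 0"
    using gbinomial_Vandermonde[of "1/2::real" "1/2" n] one by simp
  then have "fact n * (-2)^n * (\<Sum>k=0..n. ((1/2::real) gchoose k) * ((1/2) gchoose (n - k))) = 0"
    by simp
  moreover have "fact n * (-2)^n * (\<Sum>k=0..n. ((1/2::real) gchoose k) * ((1/2) gchoose (n - k)))
     = (\<Sum>k=0..n. real (n choose k) * hh k * hh (n - k))"
    unfolding sum_distrib_left
  proof (intro sum.cong refl)
    fix k assume k: "k \<in> {0..n}"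
    then have f0: "fact k * fact (n - k) * (n choose k) = fact n"
      by (intro binomial_fact_lemma) auto
    have f: "(fact n::real) = real (n choose k) * fact k * fact (n - k)"
    proof -
      have "real (fact k * fact (n - k) * (n choose k)) = real (fact n)" using f0 by simp
      then show ?thesis by (simp add: algebra_simps)
    qed
    have p: "(-2::real)^n = (-2)^k * (-2)^(n-k)" using k by (simp add: power_add[symmetric])
    show "fact n * (-2)^n * (((1/2::real) gchoose k) * ((1/2) gchoose (n - k))) = real (n choose k) * hh k * hh (n - k)"
      unfolding f p hh_def by (simp add: algebra_simps)
  qed
  ultimately show ?thesis by simp
qed

lemma comb_ordered:
  assumes "n \<ge> 2"
  shows "(\<Sum>k=1..n-1. (n choose k) * odd_dfact k * odd_dfact (n - k)) = 2 * odd_dfact n"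
proof -
  have split: "{0..n} = insert 0 (insert n {1..n-1})" using assms by auto
  have "(\<Sum>k=0..n. real (n choose k) * hh k * hh (n - k))
      = 2 * hh n + (\<Sum>k=1..n-1. real (n choose k) * hh k * hh (n - k))"
    unfolding split using assms by (simp add: hh_0)
  also have "(\<Sum>k=1..n-1. real (n choose k) * hh k * hh (n - k))
      = (\<Sum>k=1..n-1. real ((n choose k) * odd_dfact k * odd_dfact (n - k)))"
    by (intro sum.cong refl) (auto simp: hh_pos)
  finally have "2 * hh n + (\<Sum>k=1..n-1. real ((n choose k) * odd_dfact k * odd_dfact (n - k))) = 0"
    using conv_zero[OF assms] by simp
  then have "real (\<Sum>k=1..n-1. (n choose k) * odd_dfact k * odd_dfact (n - k)) = real (2 * odd_dfact n)"
    using assms by (simp add: hh_pos)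
  then show ?thesis by (simp only: of_nat_eq_iff)
qed

lemma comb_first:
  assumes "n \<ge> 2"
  shows "(\<Sum>k=1..n-1. ((n-1) choose (k-1)) * odd_dfact k * odd_dfact (n - k)) = odd_dfact n"
proof -
  define h where "h k = odd_dfact k * odd_dfact (n - k)" for k
  have hs: "h (n - k) = h k" if "k \<le> n" for k using that by (simp add: h_def)
  have cs: "n choose k = ((n-1) choose (k-1)) + ((n-1) choose k)" if "1 \<le> k" for k
    using that assms by (cases n; cases k) auto
  have A: "(\<Sum>k=1..n-1. (n choose k) * h k)
      = (\<Sum>k=1..n-1. ((n-1) choose (k-1)) * h k) + (\<Sum>k=1..n-1. ((n-1) choose k) * h k)"
    by (subst sum.distrib[symmetric], intro sum.cong refl) (simp add: cs algebra_simps)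
  have B: "(\<Sum>k=1..n-1. ((n-1) choose k) * h k) = (\<Sum>k=1..n-1. ((n-1) choose (k-1)) * h k)"
  proof (rule sum.reindex_bij_witness[of _ "\<lambda>k. n - k" "\<lambda>k. n - k"])
    fix k assume k: "k \<in> {1..n-1}"
    then show "n - (n - k) = k" "n - k \<in> {1..n-1}" by auto
    show "((n-1) choose (n - k - 1)) * h (n - k) = ((n-1) choose k) * h k"
      using k hs[of k] binomial_symmetric[of k "n-1"] by (auto simp: diff_diff_add)
  qed auto
  show ?thesis using comb_ordered[OF assms] A B unfolding h_def by (simp add: mult.assoc)
qed

definition mu :: "('e \<Rightarrow> real) \<Rightarrow> 'e set \<Rightarrow> 'e set \<Rightarrow> real" where
  "mu q F S = (\<Prod>e\<in>S. q e) * (\<Prod>e\<in>F - S. 1 - q e)"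

definition EE :: "('e \<Rightarrow> real) \<Rightarrow> 'e set \<Rightarrow> ('e set \<Rightarrow> real) \<Rightarrow> real" where
  "EE q F f = (\<Sum>S\<in>Pow F. mu q F S * f S)"

definition ind :: "bool \<Rightarrow> real" where "ind b = (if b then 1 else 0)"

definition Pr :: "('e \<Rightarrow> real) \<Rightarrow> 'e set \<Rightarrow> ('e set \<Rightarrow> bool) \<Rightarrow> real" where
  "Pr q F A = EE q F (\<lambda>S. ind (A S))"

definition qok :: "('e \<Rightarrow> real) \<Rightarrow> 'e set \<Rightarrow> bool" where
  "qok q F \<longleftrightarrow> (\<forall>e\<in>F. 0 \<le> q e \<and> q e \<le> 1)"

lemma ind_nonneg [simp]: "0 \<le> ind b" and ind_le1 [simp]: "ind b \<le> 1"
  by (auto simp: ind_def)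

lemma mu_nonneg: "qok q F \<Longrightarrow> S \<subseteq> F \<Longrightarrow> 0 \<le> mu q F S"
  unfolding mu_def qok_def by (intro mult_nonneg_nonneg prod_nonneg) auto

lemma mu_split0:
  assumes "finite F0" "e \<notin> F0" "S \<subseteq> F0"
  shows "mu q (insert e F0) S = (1 - q e) * mu q F0 S"
proof -
  have "insert e F0 - S = insert e (F0 - S)" using assms by auto
  then show ?thesis using assms unfolding mu_def by (simp add: algebra_simps)
qed

lemma mu_split1:
  assumes "finite F0" "e \<notin> F0" "S \<subseteq> F0"
  shows "mu q (insert e F0) (insert e S) = q e * mu q F0 S"
proof -
  have "insert e F0 - insert e S = F0 - S" using assms by auto
  moreover have "finite S" "e \<notin> S" using assms finite_subset by auto
  ultimately show ?thesis unfolding mu_def by (simp add: algebra_simps)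
qed

lemma EE_split:
  assumes "finite F0" "e \<notin> F0"
  shows "EE q (insert e F0) f = EE q F0 (\<lambda>T. q e * f (insert e T) + (1 - q e) * f T)"
proof -
  have P: "Pow (insert e F0) = Pow F0 \<union> insert e ` Pow F0" by (rule Pow_insert)
  have fin: "finite (Pow F0)" "finite (insert e ` Pow F0)" using assms by auto
  have dj: "Pow F0 \<inter> insert e ` Pow F0 = {}" using assms by auto
  have inj: "inj_on (insert e) (Pow F0)"
    using assms unfolding inj_on_def by (metis PowD insert_absorb insert_ident subsetD)
  have "EE q (insert e F0) f = (\<Sum>S\<in>Pow F0. mu q (insert e F0) S * f S)
        + (\<Sum>S\<in>insert e ` Pow F0. mu q (insert e F0) S * f S)"
    unfolding EE_def P by (rule sum.union_disjoint[OF fin dj])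
  also have "(\<Sum>S\<in>insert e ` Pow F0. mu q (insert e F0) S * f S)
      = (\<Sum>T\<in>Pow F0. mu q (insert e F0) (insert e T) * f (insert e T))"
    by (subst sum.reindex[OF inj]) simp
  also have "\<dots> = (\<Sum>T\<in>Pow F0. q e * mu q F0 T * f (insert e T))"
    using assms by (intro sum.cong refl) (simp add: mu_split1)
  also have "(\<Sum>S\<in>Pow F0. mu q (insert e F0) S * f S) = (\<Sum>T\<in>Pow F0. (1 - q e) * mu q F0 T * f T)"
    using assms by (intro sum.cong refl) (simp add: mu_split0)
  finally show ?thesis unfolding EE_def
    by (simp add: sum.distrib[symmetric] algebra_simps)
qed

lemma EE_empty: "EE q {} f = f {}"
  by (simp add: EE_def mu_def)

lemma EE_add: "EE q F (\<lambda>S. f S + g S) = EE q F f + EE q F g"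
  by (simp add: EE_def algebra_simps sum.distrib)

lemma EE_cmult: "EE q F (\<lambda>S. c * f S) = c * EE q F f"
  unfolding EE_def sum_distrib_left by (simp add: ac_simps)

lemma EE_multc: "EE q F (\<lambda>S. f S * c) = EE q F f * c"
  unfolding EE_def sum_distrib_right by (simp add: ac_simps)

lemma EE_sum: "EE q F (\<lambda>S. \<Sum>i\<in>I. f i S) = (\<Sum>i\<in>I. EE q F (f i))"
  by (simp add: EE_def sum_distrib_left sum.swap[of _ I])

lemma EE_mono:
  assumes "qok q F" "\<And>S. S \<subseteq> F \<Longrightarrow> f S \<le> g S"
  shows "EE q F f \<le> EE q F g"
  unfolding EE_def using assms by (intro sum_mono mult_left_mono) (auto intro: mu_nonneg)

lemma EE_nonneg:
  assumes "qok q F" "\<And>S. S \<subseteq> F \<Longrightarrow> 0 \<le> f S"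
  shows "0 \<le> EE q F f"
  using EE_mono[of q F "\<lambda>_. 0" f] assms by (simp add: EE_def)

lemma EE_cong:
  assumes "\<And>S. S \<subseteq> F \<Longrightarrow> f S = g S"
  shows "EE q F f = EE q F g"
  unfolding EE_def using assms by (intro sum.cong refl) auto

lemma EE_one: "finite F \<Longrightarrow> EE q F (\<lambda>_. 1) = 1"
proof (induction F rule: finite_induct)
  case empty then show ?case by (simp add: EE_empty)
next
  case (insert e F) then show ?case by (simp add: EE_split algebra_simps)
qed

lemma EE_const: "finite F \<Longrightarrow> EE q F (\<lambda>_. c) = c"
  using EE_cmult[of q F c "\<lambda>_. 1"] EE_one[of F q] by simp

lemma Pr_nonneg: "qok q F \<Longrightarrow> 0 \<le> Pr q F A"
  unfolding Pr_def by (rule EE_nonneg) auto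

lemma Pr_le1: "qok q F \<Longrightarrow> finite F \<Longrightarrow> Pr q F A \<le> 1"
  unfolding Pr_def using EE_mono[of q F "\<lambda>S. ind (A S)" "\<lambda>_. 1"] EE_one[of F q] by auto

lemma Pr_mono:
  assumes "qok q F" "\<And>S. S \<subseteq> F \<Longrightarrow> A S \<Longrightarrow> B S"
  shows "Pr q F A \<le> Pr q F B"
  unfolding Pr_def using assms by (intro EE_mono) (auto simp: ind_def)

lemma Pr_union:
  assumes "qok q F" "finite I"
  shows "Pr q F (\<lambda>S. \<exists>i\<in>I. A i S) \<le> (\<Sum>i\<in>I. Pr q F (A i))"
proof -
  have "Pr q F (\<lambda>S. \<exists>i\<in>I. A i S) \<le> EE q F (\<lambda>S. \<Sum>i\<in>I. ind (A i S))"
    unfolding Pr_def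
  proof (rule EE_mono[OF assms(1)])
    fix S
    show "ind (\<exists>i\<in>I. A i S) \<le> (\<Sum>i\<in>I. ind (A i S))"
    proof (cases "\<exists>i\<in>I. A i S")
      case True
      then obtain i where i: "i \<in> I" "A i S" by blast
      have "ind (A i S) \<le> (\<Sum>i\<in>I. ind (A i S))"
        by (rule member_le_sum) (use i assms in auto)
      then show ?thesis using True i by (simp add: ind_def)
    qed (auto simp: ind_def intro: sum_nonneg)
  qed
  also have "\<dots> = (\<Sum>i\<in>I. Pr q F (A i))" by (simp add: EE_sum Pr_def)
  finally show ?thesis .
qed

section \<open>BK inequality\<close>

definition dis :: "('e set \<Rightarrow> bool) \<Rightarrow> ('e set \<Rightarrow> bool) \<Rightarrow> 'e set \<Rightarrow> bool" where
  "dis A B S \<longleftrightarrow> (\<exists>S1 S2. S1 \<subseteq> S \<and> S2 \<subseteq> S \<and> S1 \<inter> S2 = {} \<and> A S1 \<and> B S2)"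

definition incr :: "('e set \<Rightarrow> bool) \<Rightarrow> bool" where
  "incr A \<longleftrightarrow> (\<forall>S T. A S \<longrightarrow> S \<subseteq> T \<longrightarrow> A T)"

lemma incrD: "incr A \<Longrightarrow> A S \<Longrightarrow> S \<subseteq> T \<Longrightarrow> A T"
  unfolding incr_def by blast

lemma incr_dis: "incr (dis A B)"
  unfolding incr_def
proof (intro allI impI)
  fix S T assume "dis A B S" "S \<subseteq> T"
  then obtain S1 S2 where "S1 \<subseteq> S" "S2 \<subseteq> S" "S1 \<inter> S2 = {}" "A S1" "B S2" unfolding dis_def by blast
  then show "dis A B T" unfolding dis_def using \<open>S \<subseteq> T\<close> by (intro exI[of _ S1] exI[of _ S2]) auto
qed

lemma incr_const: "incr (\<lambda>S. c)"
  unfolding incr_def by blast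

definition EG :: "('e set \<Rightarrow> bool) \<Rightarrow> ('e set \<Rightarrow> bool) \<Rightarrow> 'e set \<Rightarrow> 'e set \<Rightarrow> 'e set \<Rightarrow> bool" where
  "EG A B G S S' \<longleftrightarrow> (\<exists>S1 S2. S1 \<subseteq> S \<and> S2 \<subseteq> (S' \<inter> G) \<union> (S - G) \<and> S1 \<inter> S2 = {} \<and> A S1 \<and> B S2)"

definition DD :: "('e set \<Rightarrow> bool) \<Rightarrow> ('e set \<Rightarrow> bool) \<Rightarrow> 'e set \<Rightarrow> 'e set \<Rightarrow> bool" where
  "DD A B X Y \<longleftrightarrow> (\<exists>S1 S2. S1 \<subseteq> X \<and> S2 \<subseteq> Y \<and> S1 \<inter> S2 = {} \<and> A S1 \<and> B S2)"

lemma DD_mono: "DD A B X Y \<Longrightarrow> X \<subseteq> X' \<Longrightarrow> Y \<subseteq> Y' \<Longrightarrow> DD A B X' Y'"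
proof -
  assume "DD A B X Y" "X \<subseteq> X'" "Y \<subseteq> Y'"
  then obtain S1 S2 where "S1 \<subseteq> X" "S2 \<subseteq> Y" "S1 \<inter> S2 = {}" "A S1" "B S2" unfolding DD_def by blast
  then show "DD A B X' Y'" unfolding DD_def using \<open>X \<subseteq> X'\<close> \<open>Y \<subseteq> Y'\<close>
    by (intro exI[of _ S1] exI[of _ S2]) auto
qed

lemma DD_11:
  assumes "DD A B (insert e T) (insert e Z)" "incr A" "incr B"
  shows "DD A B (insert e T) Z \<or> DD A B T (insert e Z)"
proof -
  obtain S1 S2 where s: "S1 \<subseteq> insert e T" "S2 \<subseteq> insert e Z" "S1 \<inter> S2 = {}" "A S1" "B S2"
    using assms(1) unfolding DD_def by blast
  show ?thesis
  proof (cases "e \<in> S1")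
    case True
    then have "e \<notin> S2" using s by auto
    then have "S2 \<subseteq> Z" using s by auto
    then show ?thesis using s unfolding DD_def by blast
  next
    case False
    then have "S1 \<subseteq> T" using s by auto
    then show ?thesis using s unfolding DD_def by blast
  qed
qed

lemma point_ineq:
  fixes d00 d01 d10 d11 :: bool and q :: real
  assumes "0 \<le> q" "q \<le> 1" "d00 \<longrightarrow> d01" "d00 \<longrightarrow> d10" "d10 \<longrightarrow> d11" "d01 \<longrightarrow> d11"
    "d11 \<longrightarrow> d10 \<or> d01"
  shows "q * (q * ind d11 + (1 - q) * ind d11) + (1 - q) * (q * ind d00 + (1 - q) * ind d00)
     \<le> q * (q * ind d11 + (1 - q) * ind d10) + (1 - q) * (q * ind d01 + (1 - q) * ind d00)"
proof -
  have q1: "0 \<le> q * (1 - q)" using assms by simp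
  show ?thesis using assms q1 by (cases d00; cases d01; cases d10; cases d11) (auto simp: ind_def algebra_simps)
qed

lemma EG_step:
  assumes F: "finite F" and q: "qok q F" and G: "G \<subseteq> F" and e: "e \<in> F" "e \<notin> G"
    and AB: "incr A" "incr B"
  shows "EE q F (\<lambda>S. EE q F (\<lambda>S'. ind (EG A B G S S')))
       \<le> EE q F (\<lambda>S. EE q F (\<lambda>S'. ind (EG A B (insert e G) S S')))"
proof -
  define F0 where "F0 = F - {e}"
  have F0: "finite F0" "e \<notin> F0" "F = insert e F0" using F e unfolding F0_def by auto
  have q0: "qok q F0" using q unfolding qok_def F0_def by auto
  have qe: "0 \<le> q e" "q e \<le> 1" using q e unfolding qok_def by auto
  define Base where "Base T T' = (T' \<inter> G) \<union> (T - G)" for T T'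
  have h1: "EG A B G (if x then insert e T else T) (if y then insert e T' else T')
        = DD A B (if x then insert e T else T) (if x then insert e (Base T T') else Base T T')"
    if "T \<subseteq> F0" "T' \<subseteq> F0" for x y T T'
  proof -
    have "((if y then insert e T' else T') \<inter> G) \<union> ((if x then insert e T else T) - G)
        = (if x then insert e (Base T T') else Base T T')"
      using that e F0 unfolding Base_def by auto
    then show ?thesis unfolding EG_def DD_def by simp
  qed
  have h2: "EG A B (insert e G) (if x then insert e T else T) (if y then insert e T' else T')
        = DD A B (if x then insert e T else T) (if y then insert e (Base T T') else Base T T')"
    if "T \<subseteq> F0" "T' \<subseteq> F0" for x y T T'
  proof -
    have "((if y then insert e T' else T') \<inter> insert e G) \<union> ((if x then insert e T else T) - insert e G)
        = (if y then insert e (Base T T') else Base T T')"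
      using that e F0 unfolding Base_def by auto
    then show ?thesis unfolding EG_def DD_def by simp
  qed
  have L: "EE q F (\<lambda>S. EE q F (\<lambda>S'. ind (EG A B G' S S'))) =
     EE q F0 (\<lambda>T. EE q F0 (\<lambda>T'.
        q e * (q e * ind (EG A B G' (insert e T) (insert e T')) + (1 - q e) * ind (EG A B G' (insert e T) T'))
      + (1 - q e) * (q e * ind (EG A B G' T (insert e T')) + (1 - q e) * ind (EG A B G' T T'))))" for G'
    unfolding F0(3) EE_split[OF F0(1,2)] by (simp add: EE_add EE_cmult)
  show ?thesis
    unfolding L
  proof (intro EE_mono[OF q0])
    fix T T' assume T: "T \<subseteq> F0" "T' \<subseteq> F0"
    let ?D = "\<lambda>x z. DD A B (if x then insert e T else T) (if z then insert e (Base T T') else Base T T')"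
    have a: "EG A B G (insert e T) (insert e T') = ?D True True"
      "EG A B G (insert e T) T' = ?D True True"
      "EG A B G T (insert e T') = ?D False False"
      "EG A B G T T' = ?D False False"
      using h1[OF T, of True True] h1[OF T, of True False] h1[OF T, of False True] h1[OF T, of False False]
      by simp_all
    have b: "EG A B (insert e G) (insert e T) (insert e T') = ?D True True"
      "EG A B (insert e G) (insert e T) T' = ?D True False"
      "EG A B (insert e G) T (insert e T') = ?D False True"
      "EG A B (insert e G) T T' = ?D False False"
      using h2[OF T, of True True] h2[OF T, of True False] h2[OF T, of False True] h2[OF T, of False False]
      by simp_all
    have m1: "?D False False \<longrightarrow> ?D False True" "?D False False \<longrightarrow> ?D True False"
      "?D True False \<longrightarrow> ?D True True" "?D False True \<longrightarrow> ?D True True"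
      by (auto elim: DD_mono)
    have m2: "?D True True \<longrightarrow> ?D True False \<or> ?D False True"
      using DD_11[OF _ AB] by simp
    show "q e * (q e * ind (EG A B G (insert e T) (insert e T')) + (1 - q e) * ind (EG A B G (insert e T) T'))
      + (1 - q e) * (q e * ind (EG A B G T (insert e T')) + (1 - q e) * ind (EG A B G T T'))
      \<le> q e * (q e * ind (EG A B (insert e G) (insert e T) (insert e T')) + (1 - q e) * ind (EG A B (insert e G) (insert e T) T'))
      + (1 - q e) * (q e * ind (EG A B (insert e G) T (insert e T')) + (1 - q e) * ind (EG A B (insert e G) T T'))"
      unfolding a b by (rule point_ineq[OF qe m1 m2])
  qed
qed

theorem BK:
  assumes F: "finite F" and q: "qok q F" and AB: "incr A" "incr B"
  shows "Pr q F (dis A B) \<le> Pr q F A * Pr q F B"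
proof -
  define Phi where "Phi G = EE q F (\<lambda>S. EE q F (\<lambda>S'. ind (EG A B G S S')))" for G
  have chain0: "finite G \<Longrightarrow> G \<subseteq> F \<Longrightarrow> Phi {} \<le> Phi G" for G
  proof (induction G rule: finite_induct)
    case (insert e G)
    then have "Phi G \<le> Phi (insert e G)" unfolding Phi_def by (intro EG_step[OF F q]) (use AB in auto)
    with insert show ?case by auto
  qed simp
  have chain: "G \<subseteq> F \<Longrightarrow> Phi {} \<le> Phi G" for G
    using chain0[of G] F finite_subset by blast
  have "Phi {} = Pr q F (dis A B)"
    unfolding Phi_def Pr_def EG_def dis_def by (simp add: EE_const[OF F])
  moreover have "Phi F \<le> EE q F (\<lambda>S. EE q F (\<lambda>S'. ind (A S) * ind (B S')))"
    unfolding Phi_def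
  proof (intro EE_mono[OF q])
    fix S S' assume S: "S \<subseteq> F" "S' \<subseteq> F"
    have "A S \<and> B S'" if EGh: "EG A B F S S'"
    proof -
      obtain S1 S2 where s: "S1 \<subseteq> S" "S2 \<subseteq> (S' \<inter> F) \<union> (S - F)" "A S1" "B S2"
        using EGh unfolding EG_def by (elim exE conjE) (rule that; assumption)
      have "S2 \<subseteq> S'" using s(2) S by auto
      then show ?thesis using incrD[OF AB(1) s(3) s(1)] incrD[OF AB(2) s(4)] by simp
    qed
    then show "ind (EG A B F S S') \<le> ind (A S) * ind (B S')" by (auto simp: ind_def)
  qed
  moreover have "EE q F (\<lambda>S. EE q F (\<lambda>S'. ind (A S) * ind (B S'))) = Pr q F A * Pr q F B"
    unfolding Pr_def by (simp add: EE_cmult EE_multc)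
  ultimately show ?thesis using chain[of F] by simp
qed

definition cedge :: "'v set set \<Rightarrow> 'v \<Rightarrow> 'v \<Rightarrow> bool" where
  "cedge S x y \<longleftrightarrow> x \<noteq> y \<and> {x, y} \<in> S"

abbreviation conn :: "'v set set \<Rightarrow> 'v \<Rightarrow> 'v \<Rightarrow> bool" where
  "conn S \<equiv> (cedge S)\<^sup>*\<^sup>*"

lemma cedge_sym: "cedge S x y \<Longrightarrow> cedge S y x"
  unfolding cedge_def by (auto simp: insert_commute)

lemma conn_mono: "conn S x y \<Longrightarrow> S \<subseteq> T \<Longrightarrow> conn T x y"
proof (induction rule: rtranclp_induct)
  case (step y z)
  then have "cedge T y z" unfolding cedge_def by auto
  with step show ?case by (meson rtranclp.rtrancl_into_rtrancl)
qed simp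

lemma conn_sym: "conn S x y \<Longrightarrow> conn S y x"
proof (induction rule: rtranclp_induct)
  case (step y z)
  then show ?case using cedge_sym by (meson converse_rtranclp_into_rtranclp)
qed simp

lemma conn_trans: "conn S x y \<Longrightarrow> conn S y z \<Longrightarrow> conn S x z"
  by (rule rtranclp_trans)

lemma conn_edge: "x \<noteq> y \<Longrightarrow> {x, y} \<in> S \<Longrightarrow> conn S x y"
  by (rule r_into_rtranclp) (simp add: cedge_def)

lemma conn_empty: "conn {} x y \<Longrightarrow> x = y"
  by (induction rule: rtranclp_induct) (auto simp: cedge_def)

lemma conn_vert: "conn S x y \<Longrightarrow> y = x \<or> y \<in> \<Union>S"
  by (induction rule: rtranclp_induct) (auto simp: cedge_def)

lemma conn_first: "conn S x y \<Longrightarrow> x \<noteq> y \<Longrightarrow> \<exists>x'. x \<noteq> x' \<and> {x, x'} \<in> S"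
  by (erule converse_rtranclpE) (auto simp: cedge_def)

lemma conn_remove:
  assumes "conn S a b"
  shows "conn (S - {{w, w'}}) a b \<or> conn (S - {{w, w'}}) w b \<or> conn (S - {{w, w'}}) w' b"
  using assms
proof (induction rule: rtranclp_induct)
  case base then show ?case by simp
next
  case (step y z)
  show ?case
  proof (cases "{y, z} = {w, w'}")
    case True
    then have "z = w \<or> z = w'" by (metis insertI1 insertI2 insert_iff singleton_iff)
    then show ?thesis by auto
  next
    case False
    then have "cedge (S - {{w, w'}}) y z" using step(2) unfolding cedge_def by auto
    then show ?thesis using step(3) by (meson rtranclp.rtrancl_into_rtrancl)
  qed
qed

definition compo :: "'v set set \<Rightarrow> 'v \<Rightarrow> 'v set set" where
  "compo S a = {f \<in> S. \<forall>x\<in>f. conn S a x}"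

lemma comp_sub: "compo S a \<subseteq> S"
  unfolding compo_def by auto

lemma conn_comp:
  assumes "conn S a b"
  shows "conn (compo S a) a b"
  using assms
proof (induction rule: rtranclp_induct)
  case base then show ?case by simp
next
  case (step y z)
  have "conn S a z" using step(1,2) by (meson rtranclp.rtrancl_into_rtrancl)
  then have "{y, z} \<in> compo S a" using step(1,2) unfolding compo_def cedge_def by auto
  then have "cedge (compo S a) y z" using step(2) unfolding cedge_def by auto
  then show ?case using step(3) by (meson rtranclp.rtrancl_into_rtrancl)
qed

lemma comp_disj:
  assumes "{} \<notin> S" "\<not> conn S a b"
  shows "compo S a \<inter> compo S b = {}"
proof (rule ccontr)
  assume "compo S a \<inter> compo S b \<noteq> {}"
  then obtain f where f: "f \<in> S" "\<forall>x\<in>f. conn S a x" "\<forall>x\<in>f. conn S b x"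
    unfolding compo_def by auto
  then obtain x where "x \<in> f" using assms(1) by (metis all_not_in_conv)
  then have "conn S a b" using f conn_sym conn_trans by metis
  then show False using assms by simp
qed

definition connall :: "'v set set \<Rightarrow> 'v \<Rightarrow> (nat \<Rightarrow> 'v) \<Rightarrow> nat set \<Rightarrow> bool" where
  "connall S u Y I \<longleftrightarrow> (\<forall>i\<in>I. conn S u (Y i))"

definition R1w :: "'v set set \<Rightarrow> 'v \<Rightarrow> 'v \<Rightarrow> (nat \<Rightarrow> 'v) \<Rightarrow> nat set \<Rightarrow> nat set \<Rightarrow> bool" where
  "R1w S w u Y I1 I2 \<longleftrightarrow> (\<exists>S0 S1 S2. S0 \<subseteq> S \<and> S1 \<subseteq> S \<and> S2 \<subseteq> S \<and> S0 \<inter> S1 = {} \<and> S0 \<inter> S2 = {}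
      \<and> S1 \<inter> S2 = {} \<and> conn S0 w u \<and> connall S1 u Y I1 \<and> connall S2 u Y I2)"

lemma R1w_swap:
  assumes "R1w S w u Y A B" shows "R1w S w u Y B A"
proof -
  obtain S0 S1 S2 where s: "S0 \<subseteq> S \<and> S1 \<subseteq> S \<and> S2 \<subseteq> S \<and> S0 \<inter> S1 = {} \<and> S0 \<inter> S2 = {}
      \<and> S1 \<inter> S2 = {} \<and> conn S0 w u \<and> connall S1 u Y A \<and> connall S2 u Y B"
    using assms unfolding R1w_def by (elim exE) (rule that)
  show ?thesis unfolding R1w_def
    by (rule exI[of _ S0], rule exI[of _ S2], rule exI[of _ S1]) (use s in \<open>auto simp: Int_commute\<close>)
qed

lemma R1w_mono:
  assumes "R1w S w u Y A B" "S \<subseteq> T" shows "R1w T w u Y A B"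
proof -
  obtain S0 S1 S2 where s: "S0 \<subseteq> S \<and> S1 \<subseteq> S \<and> S2 \<subseteq> S \<and> S0 \<inter> S1 = {} \<and> S0 \<inter> S2 = {}
      \<and> S1 \<inter> S2 = {} \<and> conn S0 w u \<and> connall S1 u Y A \<and> connall S2 u Y B"
    using assms unfolding R1w_def by (elim exE) (rule that)
  show ?thesis unfolding R1w_def
    by (rule exI[of _ S0], rule exI[of _ S1], rule exI[of _ S2]) (use s assms(2) in auto)
qed

lemma concl_ex: "I1 \<subseteq> I \<Longrightarrow> I1 \<noteq> {} \<Longrightarrow> I1 \<noteq> I \<Longrightarrow> R1w S w u Y I1 (I - I1) \<Longrightarrow>
   \<exists>u I1. I1 \<subseteq> I \<and> I1 \<noteq> {} \<and> I1 \<noteq> I \<and> R1w S w u Y I1 (I - I1)"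
  by blast

lemma decomp:
  assumes "finite S" "{} \<notin> S" "i0 \<in> I" "j0 \<in> I" "i0 \<noteq> j0" "connall S w Y I"
  shows "\<exists>u I1. I1 \<subseteq> I \<and> I1 \<noteq> {} \<and> I1 \<noteq> I \<and> R1w S w u Y I1 (I - I1)"
  using assms
proof (induction "card S" arbitrary: S w rule: less_induct)
  case less
  show ?case
  proof (cases "\<exists>i\<in>I. Y i = w")
    case True
    define I1 where "I1 = {i\<in>I. Y i = w}"
    show ?thesis
    proof (cases "I1 = I")
      case False
      have "I1 \<noteq> {}" using True unfolding I1_def by auto
      moreover have "R1w S w w Y I1 (I - I1)"
        unfolding R1w_def
        by (rule exI[of _ "{}"], rule exI[of _ "{}"], rule exI[of _ S])
           (use less.prems in \<open>auto simp: connall_def I1_def\<close>)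
      moreover have "I1 \<subseteq> I" unfolding I1_def by auto
      ultimately show ?thesis using False concl_ex by metis
    next
      case True
      then have all: "\<forall>i\<in>I. Y i = w" unfolding I1_def by auto
      have "R1w S w w Y {i0} (I - {i0})"
        unfolding R1w_def
        by (rule exI[of _ "{}"], rule exI[of _ "{}"], rule exI[of _ "{}"])
           (use all less.prems in \<open>auto simp: connall_def\<close>)
      moreover have "{i0} \<subseteq> I" "{i0} \<noteq> I" using less.prems by auto
      ultimately show ?thesis using concl_ex[of "{i0}" I S w w Y] by blast
    qed
  next
    case False
    have "conn S w (Y i0)" using less.prems unfolding connall_def by auto
    moreover have "w \<noteq> Y i0" using False less.prems by auto
    ultimately obtain w' where w': "w \<noteq> w'" "{w, w'} \<in> S" using conn_first by metis
    define e where "e = {w, w'}"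
    define S' where "S' = S - {e}"
    have cardS': "card S' < card S" unfolding S'_def e_def
      by (rule card_Diff1_less[OF less.prems(1) w'(2)])
    have finS': "finite S'" "{} \<notin> S'" using less.prems unfolding S'_def by auto
    have rem: "conn S' w (Y i) \<or> conn S' w' (Y i)" if "i \<in> I" for i
      using conn_remove[of S w "Y i" w w'] less.prems that unfolding S'_def e_def connall_def by auto
    define IA where "IA = {i\<in>I. \<not> conn S' w (Y i)}"
    show ?thesis
    proof (cases "IA = {}")
      case True
      then have "connall S' w Y I" unfolding IA_def connall_def by auto
      then obtain u I1 where u: "I1 \<subseteq> I" "I1 \<noteq> {}" "I1 \<noteq> I" "R1w S' w u Y I1 (I - I1)"
        using less.hyps[OF cardS' finS'] less.prems by blast
      have "R1w S w u Y I1 (I - I1)" using u(4) R1w_mono[of S' w u Y I1 "I - I1" S] unfolding S'_def by blast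
      then show ?thesis using u concl_ex by metis
    next
      case IAne: False
      show ?thesis
      proof (cases "IA = I")
        case True
        then have "connall S' w' Y I" using rem unfolding IA_def connall_def by auto
        then obtain u I1 where u: "I1 \<subseteq> I" "I1 \<noteq> {}" "I1 \<noteq> I" "R1w S' w' u Y I1 (I - I1)"
          using less.hyps[OF cardS' finS'] less.prems by blast
        obtain S0 S1 S2 where s0: "S0 \<subseteq> S' \<and> S1 \<subseteq> S' \<and> S2 \<subseteq> S' \<and> S0 \<inter> S1 = {} \<and> S0 \<inter> S2 = {}
          \<and> S1 \<inter> S2 = {} \<and> conn S0 w' u \<and> connall S1 u Y I1 \<and> connall S2 u Y (I - I1)"
          using u(4) unfolding R1w_def by (elim exE) (rule that)
        then have s: "S0 \<subseteq> S'" "S1 \<subseteq> S'" "S2 \<subseteq> S'" "S0 \<inter> S1 = {}" "S0 \<inter> S2 = {}"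
          "S1 \<inter> S2 = {}" "conn S0 w' u" "connall S1 u Y I1" "connall S2 u Y (I - I1)" by auto
        have "conn (insert e S0) w w'" unfolding e_def using w' by (intro conn_edge) auto
        moreover have "conn (insert e S0) w' u" using s(7) by (rule conn_mono) auto
        ultimately have c: "conn (insert e S0) w u" by (rule conn_trans)
        have "e \<notin> S1" "e \<notin> S2" using s unfolding S'_def by auto
        then have "R1w S w u Y I1 (I - I1)" unfolding R1w_def
          apply (rule_tac exI[of _ "insert e S0"], rule_tac exI[of _ S1], rule_tac exI[of _ S2])
          using s c w' unfolding S'_def e_def by auto
        then show ?thesis using u concl_ex by metis
      next
        case False
        have IAsub: "IA \<subseteq> I" unfolding IA_def by auto
        obtain i where i: "i \<in> IA" using IAne by auto
        have nc: "\<not> conn S' w w'"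
        proof
          assume "conn S' w w'"
          moreover have "conn S' w' (Y i)" using rem[of i] i unfolding IA_def by auto
          ultimately have "conn S' w (Y i)" by (rule conn_trans)
          then show False using i unfolding IA_def by auto
        qed
        define S1 where "S1 = insert e (compo S' w')"
        define S2 where "S2 = compo S' w"
        have d: "compo S' w \<inter> compo S' w' = {}" using comp_disj[OF finS'(2) nc] .
        have eS': "e \<notin> S'" unfolding S'_def by auto
        have eS: "e \<in> S" "e \<notin> compo S' w" "e \<notin> compo S' w'"
          using w'(2) eS' comp_sub[of S' w] comp_sub[of S' w'] unfolding e_def by auto
        have c1: "connall S1 w Y IA"
          unfolding connall_def
        proof
          fix j assume j: "j \<in> IA"
          then have "conn S' w' (Y j)" using rem[of j] unfolding IA_def by auto
          then have "conn (compo S' w') w' (Y j)" by (rule conn_comp)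
          then have "conn S1 w' (Y j)" unfolding S1_def by (rule conn_mono) auto
          moreover have "conn S1 w w'" unfolding S1_def e_def using w' by (intro conn_edge) auto
          ultimately show "conn S1 w (Y j)" using conn_trans by metis
        qed
        have c2: "connall S2 w Y (I - IA)"
          unfolding connall_def
        proof
          fix j assume j: "j \<in> I - IA"
          then have "conn S' w (Y j)" unfolding IA_def by auto
          then show "conn S2 w (Y j)" unfolding S2_def by (rule conn_comp)
        qed
        have "R1w S w w Y IA (I - IA)" unfolding R1w_def
          apply (rule exI[of _ "{}"], rule exI[of _ S1], rule exI[of _ S2])
          using c1 c2 d eS comp_sub[of S' w] comp_sub[of S' w'] unfolding S1_def S2_def S'_def
          by auto
        then show ?thesis using IAsub IAne False concl_ex by metis
      qed
    qed
  qed
qed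

lemma decomp_min:
  assumes "finite S" "{} \<notin> S" "m \<in> I" "j0 \<in> I" "m \<noteq> j0" "connall S w Y I"
  shows "\<exists>u I1. I1 \<subseteq> I \<and> m \<in> I1 \<and> I1 \<noteq> I \<and> R1w S w u Y I1 (I - I1)"
proof -
  obtain u I1 where u: "I1 \<subseteq> I" "I1 \<noteq> {}" "I1 \<noteq> I" "R1w S w u Y I1 (I - I1)"
    using decomp[OF assms] by blast
  show ?thesis
  proof (cases "m \<in> I1")
    case True then show ?thesis using u by (intro exI[of _ u] exI[of _ I1]) auto
  next
    case False
    have eq: "I - (I - I1) = I1" using u(1) by auto
    have "R1w S w u Y (I - I1) (I - (I - I1))"
      unfolding eq by (rule R1w_swap[OF u(4)])
    moreover have "m \<in> I - I1" "I - I1 \<noteq> I" "I - I1 \<subseteq> I" using False assms u by auto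
    ultimately show ?thesis by (intro exI[of _ u] exI[of _ "I - I1"]) auto
  qed
qed

lemma sum_PiE_split:
  fixes f g :: "(nat \<Rightarrow> 'v) \<Rightarrow> real"
  assumes I: "finite I" "I1 \<subseteq> I"
    and f: "\<And>Y Y'. (\<And>i. i \<in> I1 \<Longrightarrow> Y i = Y' i) \<Longrightarrow> f Y = f Y'"
    and g: "\<And>Y Y'. (\<And>i. i \<in> I - I1 \<Longrightarrow> Y i = Y' i) \<Longrightarrow> g Y = g Y'"
  shows "(\<Sum>Y\<in>PiE I (\<lambda>_. X). f Y * g Y) = (\<Sum>Y\<in>PiE I1 (\<lambda>_. X). f Y) * (\<Sum>Y\<in>PiE (I - I1) (\<lambda>_. X). g Y)"
proof -
  have "(\<Sum>Y\<in>PiE I1 (\<lambda>_. X). f Y) * (\<Sum>Y\<in>PiE (I - I1) (\<lambda>_. X). g Y)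
      = (\<Sum>P\<in>PiE I1 (\<lambda>_. X) \<times> PiE (I - I1) (\<lambda>_. X). f (fst P) * g (snd P))"
    by (simp add: sum_product sum.cartesian_product case_prod_beta)
  also have "\<dots> = (\<Sum>Y\<in>PiE I (\<lambda>_. X). f Y * g Y)"
  proof (rule sum.reindex_bij_witness[of _ "\<lambda>Y. (restrict Y I1, restrict Y (I - I1))"
        "\<lambda>P. (\<lambda>i. if i \<in> I1 then fst P i else snd P i)"])
    fix Y assume Y: "Y \<in> PiE I (\<lambda>_. X)"
    show "(\<lambda>i. if i \<in> I1 then fst (restrict Y I1, restrict Y (I - I1)) i
                else snd (restrict Y I1, restrict Y (I - I1)) i) = Y"
      using Y I by (auto simp: PiE_iff extensional_def fun_eq_iff)
    show "(restrict Y I1, restrict Y (I - I1)) \<in> PiE I1 (\<lambda>_. X) \<times> PiE (I - I1) (\<lambda>_. X)"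
      using Y I by (auto simp: PiE_iff)
  next
    fix P assume P: "P \<in> PiE I1 (\<lambda>_. X) \<times> PiE (I - I1) (\<lambda>_. X)"
    have "f (\<lambda>i. if i \<in> I1 then fst P i else snd P i) = f (fst P)" by (rule f) simp
    moreover have "g (\<lambda>i. if i \<in> I1 then fst P i else snd P i) = g (snd P)" by (rule g) auto
    ultimately show "f (\<lambda>i. if i \<in> I1 then fst P i else snd P i) * g (\<lambda>i. if i \<in> I1 then fst P i else snd P i)
       = f (fst P) * g (snd P)" by simp
  next
    fix P assume P: "P \<in> PiE I1 (\<lambda>_. X) \<times> PiE (I - I1) (\<lambda>_. X)"
    obtain Y1 Y2 where P': "P = (Y1, Y2)" "Y1 \<in> PiE I1 (\<lambda>_. X)" "Y2 \<in> PiE (I - I1) (\<lambda>_. X)"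
      using P by auto
    show "(restrict (\<lambda>i. if i \<in> I1 then fst P i else snd P i) I1,
           restrict (\<lambda>i. if i \<in> I1 then fst P i else snd P i) (I - I1)) = P"
      using P' by (auto simp: PiE_iff extensional_def fun_eq_iff)
    show "(\<lambda>i. if i \<in> I1 then fst P i else snd P i) \<in> PiE I (\<lambda>_. X)"
      using P' I by (auto simp: PiE_iff extensional_def)
  qed
  finally show ?thesis by simp
qed

lemma sum_PiE_single:
  "(\<Sum>Y\<in>PiE {i} (\<lambda>_. X). f (Y i)) = (\<Sum>y\<in>X. f y)"
proof (rule sum.reindex_bij_witness[of _ "\<lambda>y. (\<lambda>j. if j = i then y else undefined)" "\<lambda>Y. Y i"])
  fix Y assume "Y \<in> PiE {i} (\<lambda>_. X)"
  then show "(\<lambda>j. if j = i then Y i else undefined) = Y" "Y i \<in> X"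
    by (auto simp: PiE_iff extensional_def fun_eq_iff)
qed (auto simp: PiE_iff extensional_def)

lemma sum_ind_card:
  "finite A \<Longrightarrow> (\<Sum>x\<in>A. ind (P x)) = real (card {x\<in>A. P x})"
  by (simp add: ind_def sum.If_cases Int_def)

lemma sum_Pow_card:
  assumes "finite A"
  shows "(\<Sum>J\<in>Pow A - {A}. f (card J)) = (\<Sum>j<card A. real (card A choose j) * f j)"
proof -
  have e: "Pow A - {A} = {J. J \<subseteq> A \<and> card J < card A}"
    using assms by (auto dest: card_subset_eq intro: psubset_card_mono)
  have "(\<Sum>J\<in>Pow A - {A}. f (card J))
      = (\<Sum>j\<in>{..<card A}. \<Sum>J\<in>{J\<in>Pow A - {A}. card J = j}. f (card J))"
    by (rule sum.group[symmetric]) (use assms e in auto)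
  also have "\<dots> = (\<Sum>j<card A. real (card A choose j) * f j)"
  proof (rule sum.cong[OF refl])
    fix j assume j: "j \<in> {..<card A}"
    have "{J\<in>Pow A - {A}. card J = j} = {B. B \<subseteq> A \<and> card B = j}" using j e by auto
    then show "(\<Sum>J\<in>{J\<in>Pow A - {A}. card J = j}. f (card J)) = real (card A choose j) * f j"
      using n_subsets[OF assms, of j] by simp
  qed
  finally show ?thesis .
qed

definition spl :: "nat set \<Rightarrow> nat set set" where
  "spl I = {I1. I1 \<subseteq> I \<and> Min I \<in> I1 \<and> I1 \<noteq> I}"

lemma spl_finite: "finite I \<Longrightarrow> finite (spl I)"
  unfolding spl_def by (rule finite_subset[of _ "Pow I"]) auto

lemma spl_count:
  assumes I: "finite I" "card I = r" "r \<ge> 2"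
  shows "(\<Sum>I1\<in>spl I. real (odd_dfact (card I1) * odd_dfact (r - card I1))) = real (odd_dfact r)"
proof -
  define m where "m = Min I"
  have m: "m \<in> I" unfolding m_def using I Min_in[of I] by (metis card.empty not_numeral_le_zero)
  define I' where "I' = I - {m}"
  have fI': "finite I'" "card I' = r - 1" using I m unfolding I'_def by auto
  define h where "h a = real (odd_dfact a * odd_dfact (r - a))" for a
  have "(\<Sum>I1\<in>spl I. h (card I1)) = (\<Sum>J\<in>Pow I' - {I'}. h (card J + 1))"
  proof (rule sum.reindex_bij_witness[of _ "insert m" "\<lambda>I1. I1 - {m}"])
    fix J assume J: "J \<in> Pow I' - {I'}"
    then have mJ: "m \<notin> J" unfolding I'_def by auto
    show "insert m J - {m} = J" using mJ by auto
    show "insert m J \<in> spl I" using J m unfolding spl_def I'_def m_def by auto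
  next
    fix I1 assume I1: "I1 \<in> spl I"
    have "finite I1" "m \<in> I1" using I1 I(1) finite_subset unfolding spl_def m_def by auto
    then have "card I1 = Suc (card (I1 - {m}))" by (rule card.remove)
    then show "h (card (I1 - {m}) + 1) = h (card I1)" by simp
    from I1 show "insert m (I1 - {m}) = I1" "I1 - {m} \<in> Pow I' - {I'}"
      unfolding spl_def I'_def m_def by auto
  qed
  also have "\<dots> = (\<Sum>j<r - 1. real ((r-1) choose j) * h (j + 1))"
    using sum_Pow_card[OF fI'(1), of "\<lambda>c. h (c + 1)"] fI'(2) by simp
  also have "\<dots> = (\<Sum>k=1..r-1. real ((r-1) choose (k-1)) * h k)"
    by (rule sum.reindex_bij_witness[of _ "\<lambda>k. k - 1" "\<lambda>j. j + 1"]) auto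
  also have "\<dots> = real (\<Sum>k=1..r-1. ((r-1) choose (k-1)) * odd_dfact k * odd_dfact (r - k))"
    unfolding h_def by (simp add: mult.assoc)
  also have "\<dots> = real (odd_dfact r)" using comb_first[of r] I by simp
  finally show ?thesis unfolding h_def .
qed

lemma incr_conn: "incr (\<lambda>S. conn S w u)"
  unfolding incr_def by (metis conn_mono)

lemma incr_connall: "incr (\<lambda>S. connall S u Y I)"
  unfolding incr_def connall_def by (meson conn_mono)

lemma incr_ex: "(\<And>i. i \<in> A \<Longrightarrow> incr (P i)) \<Longrightarrow> incr (\<lambda>S. \<exists>i\<in>A. P i S)"
  unfolding incr_def by blast

lemma incr_and: "incr P \<Longrightarrow> incr Q \<Longrightarrow> incr (\<lambda>S. P S \<and> Q S)"
  unfolding incr_def by blast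

lemma R1w_dis:
  assumes "R1w S w u Y I1 I2"
  shows "dis (\<lambda>S. conn S w u) (dis (\<lambda>S. connall S u Y I1) (\<lambda>S. connall S u Y I2)) S"
proof -
  obtain S0 S1 S2 where s: "S0 \<subseteq> S \<and> S1 \<subseteq> S \<and> S2 \<subseteq> S \<and> S0 \<inter> S1 = {} \<and> S0 \<inter> S2 = {}
      \<and> S1 \<inter> S2 = {} \<and> conn S0 w u \<and> connall S1 u Y I1 \<and> connall S2 u Y I2"
    using assms unfolding R1w_def by (elim exE) (rule that)
  have "dis (\<lambda>S. connall S u Y I1) (\<lambda>S. connall S u Y I2) (S1 \<union> S2)"
    unfolding dis_def by (rule exI[of _ S1], rule exI[of _ S2]) (use s in auto)
  then show ?thesis unfolding dis_def
    by (rule_tac exI[of _ S0], rule_tac exI[of _ "S1 \<union> S2"]) (use s in auto)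
qed

definition Blob :: "'v \<Rightarrow> 'v \<Rightarrow> 'v \<Rightarrow> 'v set set \<Rightarrow> bool" where
  "Blob w a b S \<longleftrightarrow> conn S w a \<and> conn S w b"

lemma incr_Blob: "incr (Blob w a b)"
  unfolding incr_def Blob_def
proof (intro allI impI)
  fix S T assume "conn S w a \<and> conn S w b" "S \<subseteq> T"
  then show "conn T w a \<and> conn T w b" using conn_mono[of S w a T] conn_mono[of S w b T] by simp
qed

lemma other_elem:
  assumes "finite I" "2 \<le> card I" "m \<in> I"
  shows "\<exists>j\<in>I. j \<noteq> m"
proof (rule ccontr)
  assume "\<not> (\<exists>j\<in>I. j \<noteq> m)"
  then have "I \<subseteq> {m}" by auto
  then have "card I \<le> card {m}" by (rule card_mono[rotated]) simp
  then show False using assms by simp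
qed

definition NE :: "'v \<Rightarrow> (nat \<Rightarrow> 'v) \<Rightarrow> nat set \<Rightarrow> 'v set set \<Rightarrow> bool" where
  "NE a Y I S \<longleftrightarrow> (if card I = 1 then a = Y (the_elem I)
     else (\<exists>I1\<in>spl I. dis (\<lambda>S. connall S a Y I1) (\<lambda>S. connall S a Y (I - I1)) S))"

lemma incr_NE: "incr (NE a Y I)"
  unfolding NE_def using incr_ex[OF incr_dis] incr_const by (cases "card I = 1") auto

locale fv =
  fixes q :: "'v set \<Rightarrow> real" and F :: "'v set set" and X :: "'v set"
  assumes finF: "finite F" and qok: "qok q F" and noe: "{} \<notin> F" and finX: "finite X"
    and FX: "\<Union>F \<subseteq> X"
begin

definition Pc :: "'v \<Rightarrow> (nat \<Rightarrow> 'v) \<Rightarrow> nat set \<Rightarrow> real" where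
  "Pc u Y I = Pr q F (\<lambda>S. connall S u Y I)"

definition gg :: "'v \<Rightarrow> (nat \<Rightarrow> 'v) \<Rightarrow> nat set \<Rightarrow> real" where
  "gg a Y I = (if card I = 1 then ind (a = Y (the_elem I))
     else (\<Sum>I1\<in>spl I. Pc a Y I1 * Pc a Y (I - I1)))"

definition Mf :: "'v \<Rightarrow> nat set \<Rightarrow> real" where
  "Mf u I = (\<Sum>Y\<in>PiE I (\<lambda>_. X). Pc u Y I)"

definition Gf :: "'v \<Rightarrow> nat set \<Rightarrow> real" where
  "Gf a I = (\<Sum>Y\<in>PiE I (\<lambda>_. X). gg a Y I)"

definition R1ev :: "'v \<Rightarrow> (nat \<Rightarrow> 'v) \<Rightarrow> nat set \<Rightarrow> nat set \<Rightarrow> 'v set set \<Rightarrow> bool" where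
  "R1ev w Y I1 I2 S \<longleftrightarrow> (\<exists>u\<in>X. R1w S w u Y I1 I2)"

lemma Pr_ge0: "0 \<le> Pr q F A" by (rule Pr_nonneg[OF qok])

lemma Pc_ge0: "0 \<le> Pc u Y I" unfolding Pc_def by (rule Pr_ge0)

lemma gg_ge0: "0 \<le> gg a Y I"
  unfolding gg_def by (auto intro!: sum_nonneg mult_nonneg_nonneg Pc_ge0)

lemma Mf_ge0: "0 \<le> Mf u I" unfolding Mf_def by (auto intro!: sum_nonneg Pc_ge0)

lemma Gf_ge0: "0 \<le> Gf u I" unfolding Gf_def by (auto intro!: sum_nonneg gg_ge0)

lemma conn_inX: "S \<subseteq> F \<Longrightarrow> conn S w u \<Longrightarrow> w \<in> X \<Longrightarrow> u \<in> X"
  using conn_vert[of S w u] FX by auto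

lemma Pr_const: "Pr q F (\<lambda>S. c) = ind c"
  unfolding Pr_def by (rule EE_const[OF finF])

lemma Pc_dep: "(\<And>i. i \<in> I \<Longrightarrow> Y i = Y' i) \<Longrightarrow> Pc u Y I = Pc u Y' I"
  unfolding Pc_def connall_def by simp

lemma gg_dep:
  assumes "finite I" "\<And>i. i \<in> I \<Longrightarrow> Y i = Y' i"
  shows "gg a Y I = gg a Y' I"
proof (cases "card I = 1")
  case True
  then obtain i where "I = {i}" by (meson card_1_singletonE)
  then show ?thesis using assms unfolding gg_def by simp
next
  case False
  have "Pc a Y I1 * Pc a Y (I - I1) = Pc a Y' I1 * Pc a Y' (I - I1)" if "I1 \<in> spl I" for I1
    using that assms Pc_dep[of I1 Y Y' a] Pc_dep[of "I - I1" Y Y' a] unfolding spl_def by auto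
  then show ?thesis using False unfolding gg_def by simp
qed

lemma BK2: "incr A \<Longrightarrow> incr B \<Longrightarrow> Pr q F (dis A B) \<le> Pr q F A * Pr q F B"
  by (rule BK[OF finF qok])

lemma BK3:
  assumes "incr A" "incr B" "incr C"
  shows "Pr q F (dis A (dis B C)) \<le> Pr q F A * Pr q F B * Pr q F C"
proof -
  have "Pr q F (dis A (dis B C)) \<le> Pr q F A * Pr q F (dis B C)"
    by (rule BK2[OF assms(1) incr_dis])
  also have "\<dots> \<le> Pr q F A * (Pr q F B * Pr q F C)"
    by (rule mult_left_mono[OF BK2[OF assms(2,3)] Pr_ge0])
  finally show ?thesis by (simp add: mult.assoc)
qed

lemma P1:
  assumes I: "finite I" "2 \<le> card I" and w: "w \<in> X"
  shows "Pc w Y I \<le> (\<Sum>I1\<in>spl I. Pr q F (R1ev w Y I1 (I - I1)))"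
proof -
  define m where "m = Min I"
  have m: "m \<in> I" unfolding m_def using I by (intro Min_in) auto
  obtain j0 where j0: "j0 \<in> I" "j0 \<noteq> m" using other_elem[OF I m] by blast
  have "Pc w Y I \<le> Pr q F (\<lambda>S. \<exists>I1\<in>spl I. R1ev w Y I1 (I - I1) S)"
    unfolding Pc_def
  proof (rule Pr_mono[OF qok])
    fix S assume S: "S \<subseteq> F" "connall S w Y I"
    have fS: "finite S" "{} \<notin> S" using S finF noe finite_subset by auto
    obtain u I1 where u: "I1 \<subseteq> I" "m \<in> I1" "I1 \<noteq> I" "R1w S w u Y I1 (I - I1)"
      using decomp_min[OF fS m j0(1) j0(2)[symmetric] S(2)] by blast
    obtain S0 where "S0 \<subseteq> S" "conn S0 w u" using u(4) unfolding R1w_def by blast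
    then have "u \<in> X" using conn_inX[of S0 w u] S w by auto
    then have "R1ev w Y I1 (I - I1) S" using u unfolding R1ev_def by blast
    moreover have "I1 \<in> spl I" using u unfolding spl_def m_def by auto
    ultimately show "\<exists>I1\<in>spl I. R1ev w Y I1 (I - I1) S" by blast
  qed
  also have "\<dots> \<le> (\<Sum>I1\<in>spl I. Pr q F (R1ev w Y I1 (I - I1)))"
    by (rule Pr_union[OF qok spl_finite[OF I(1)]])
  finally show ?thesis .
qed

lemma P2:
  "Pr q F (R1ev w Y I1 I2) \<le> (\<Sum>u\<in>X. Pr q F (\<lambda>S. conn S w u) * Pc u Y I1 * Pc u Y I2)"
proof -
  have "Pr q F (R1ev w Y I1 I2) \<le>
      Pr q F (\<lambda>S. \<exists>u\<in>X. dis (\<lambda>S. conn S w u) (dis (\<lambda>S. connall S u Y I1) (\<lambda>S. connall S u Y I2)) S)"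
  proof (rule Pr_mono[OF qok])
    fix S assume "R1ev w Y I1 I2 S"
    then obtain u where u: "u \<in> X" "R1w S w u Y I1 I2" unfolding R1ev_def by blast
    show "\<exists>u\<in>X. dis (\<lambda>S. conn S w u) (dis (\<lambda>S. connall S u Y I1) (\<lambda>S. connall S u Y I2)) S"
      using R1w_dis[OF u(2)] u(1) by (rule_tac bexI[of _ u]) auto
  qed
  also have "\<dots> \<le> (\<Sum>u\<in>X. Pr q F (dis (\<lambda>S. conn S w u) (dis (\<lambda>S. connall S u Y I1) (\<lambda>S. connall S u Y I2))))"
    by (rule Pr_union[OF qok finX])
  also have "\<dots> \<le> (\<Sum>u\<in>X. Pr q F (\<lambda>S. conn S w u) * Pc u Y I1 * Pc u Y I2)"
    unfolding Pc_def by (intro sum_mono BK3 incr_conn incr_connall)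
  finally show ?thesis .
qed

lemma Pr_NE:
  assumes "finite I"
  shows "Pr q F (NE a Y I) \<le> gg a Y I"
proof (cases "card I = 1")
  case True
  then show ?thesis unfolding NE_def gg_def by (simp add: Pr_const)
next
  case False
  have "Pr q F (NE a Y I) = Pr q F (\<lambda>S. \<exists>I1\<in>spl I. dis (\<lambda>S. connall S a Y I1) (\<lambda>S. connall S a Y (I - I1)) S)"
    unfolding NE_def using False by simp
  also have "\<dots> \<le> (\<Sum>I1\<in>spl I. Pr q F (dis (\<lambda>S. connall S a Y I1) (\<lambda>S. connall S a Y (I - I1))))"
    by (rule Pr_union[OF qok spl_finite[OF assms]])
  also have "\<dots> \<le> gg a Y I"
    unfolding gg_def Pc_def using False by (auto intro!: sum_mono BK2 incr_connall)
  finally show ?thesis .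
qed

lemma node:
  assumes S1: "S1 \<subseteq> F" "connall S1 u Y I" and I: "finite I" "I \<noteq> {}" and u: "u \<in> X"
  shows "\<exists>a\<in>X. \<exists>T N. T \<subseteq> S1 \<and> N \<subseteq> S1 \<and> T \<inter> N = {} \<and> conn T u a \<and> NE a Y I N"
proof (cases "card I = 1")
  case True
  then obtain i where i: "I = {i}" by (meson card_1_singletonE)
  have c: "conn S1 u (Y i)" using S1 i unfolding connall_def by auto
  then have "Y i \<in> X" using conn_inX S1 u by blast
  moreover have "NE (Y i) Y I {}" using i unfolding NE_def by simp
  ultimately show ?thesis using c by (intro bexI[of _ "Y i"] exI[of _ S1] exI[of _ "{}"]) auto
next
  case False
  have "0 < card I" using I by (simp add: card_gt_0_iff)
  then have c2: "2 \<le> card I" using False by linarith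
  define m where "m = Min I"
  have m: "m \<in> I" unfolding m_def using I by (intro Min_in) auto
  obtain j0 where j0: "j0 \<in> I" "j0 \<noteq> m" using other_elem[OF I(1) c2 m] by blast
  have fS: "finite S1" "{} \<notin> S1" using S1 finF noe finite_subset by auto
  obtain a I1 where a: "I1 \<subseteq> I" "m \<in> I1" "I1 \<noteq> I" "R1w S1 u a Y I1 (I - I1)"
    using decomp_min[OF fS m j0(1) j0(2)[symmetric] S1(2)] by blast
  obtain S0 Sa Sb where s: "S0 \<subseteq> S1 \<and> Sa \<subseteq> S1 \<and> Sb \<subseteq> S1 \<and> S0 \<inter> Sa = {} \<and> S0 \<inter> Sb = {}
      \<and> Sa \<inter> Sb = {} \<and> conn S0 u a \<and> connall Sa a Y I1 \<and> connall Sb a Y (I - I1)"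
    using a(4) unfolding R1w_def by (elim exE) (rule that)
  have "a \<in> X" using conn_inX[of S0 u a] s S1 u by auto
  moreover have "I1 \<in> spl I" using a unfolding spl_def m_def by auto
  moreover have "dis (\<lambda>S. connall S a Y I1) (\<lambda>S. connall S a Y (I - I1)) (Sa \<union> Sb)"
    unfolding dis_def by (rule exI[of _ Sa], rule exI[of _ Sb]) (use s in auto)
  ultimately have "a \<in> X" "NE a Y I (Sa \<union> Sb)" unfolding NE_def using False by auto
  then show ?thesis using s by (intro bexI[of _ a] exI[of _ S0] exI[of _ "Sa \<union> Sb"]) auto
qed

lemma P3:
  assumes I: "finite I" "I1 \<in> spl I" and w: "w \<in> X"
  shows "Pr q F (R1ev w Y I1 (I - I1))
    \<le> (\<Sum>a\<in>X. \<Sum>b\<in>X. Pr q F (Blob w a b) * gg a Y I1 * gg b Y (I - I1))"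
proof -
  have I1: "finite I1" "I1 \<noteq> {}" "finite (I - I1)" "I - I1 \<noteq> {}"
    using I unfolding spl_def by (auto intro: finite_subset)
  have "Pr q F (R1ev w Y I1 (I - I1)) \<le>
     Pr q F (\<lambda>S. \<exists>ab\<in>X \<times> X. dis (Blob w (fst ab) (snd ab)) (dis (NE (fst ab) Y I1) (NE (snd ab) Y (I - I1))) S)"
  proof (rule Pr_mono[OF qok])
    fix S assume S: "S \<subseteq> F" "R1ev w Y I1 (I - I1) S"
    then obtain u where u: "u \<in> X" "R1w S w u Y I1 (I - I1)" unfolding R1ev_def by blast
    obtain S0 S1 S2 where s: "S0 \<subseteq> S \<and> S1 \<subseteq> S \<and> S2 \<subseteq> S \<and> S0 \<inter> S1 = {} \<and> S0 \<inter> S2 = {}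
      \<and> S1 \<inter> S2 = {} \<and> conn S0 w u \<and> connall S1 u Y I1 \<and> connall S2 u Y (I - I1)"
      using u(2) unfolding R1w_def by (elim exE) (rule that)
    obtain a T1 N1 where n1: "a \<in> X" "T1 \<subseteq> S1" "N1 \<subseteq> S1" "T1 \<inter> N1 = {}" "conn T1 u a" "NE a Y I1 N1"
      using node[of S1 u Y I1] s S I1 u by blast
    obtain b T2 N2 where n2: "b \<in> X" "T2 \<subseteq> S2" "N2 \<subseteq> S2" "T2 \<inter> N2 = {}" "conn T2 u b" "NE b Y (I - I1) N2"
      using node[of S2 u Y "I - I1"] s S I1 u by blast
    define B where "B = S0 \<union> T1 \<union> T2"
    have "conn B w u" unfolding B_def using s by (auto intro: conn_mono)
    moreover have "conn B u a" "conn B u b" unfolding B_def using n1 n2 by (auto intro: conn_mono)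
    ultimately have "Blob w a b B" unfolding Blob_def using conn_trans by metis
    moreover have "dis (NE a Y I1) (NE b Y (I - I1)) (N1 \<union> N2)"
      unfolding dis_def by (rule exI[of _ N1], rule exI[of _ N2]) (use n1 n2 s in auto)
    moreover have "B \<subseteq> S" "N1 \<union> N2 \<subseteq> S" "B \<inter> (N1 \<union> N2) = {}"
      unfolding B_def using s n1 n2 by auto
    ultimately have "dis (Blob w a b) (dis (NE a Y I1) (NE b Y (I - I1))) S"
      unfolding dis_def[of "Blob w a b"] by blast
    then show "\<exists>ab\<in>X \<times> X. dis (Blob w (fst ab) (snd ab)) (dis (NE (fst ab) Y I1) (NE (snd ab) Y (I - I1))) S"
      using n1(1) n2(1) by (intro bexI[of _ "(a, b)"]) auto
  qed
  also have "\<dots> \<le> (\<Sum>ab\<in>X \<times> X. Pr q F (dis (Blob w (fst ab) (snd ab)) (dis (NE (fst ab) Y I1) (NE (snd ab) Y (I - I1)))))"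
    by (rule Pr_union[OF qok]) (use finX in auto)
  also have "\<dots> \<le> (\<Sum>ab\<in>X \<times> X. Pr q F (Blob w (fst ab) (snd ab)) * gg (fst ab) Y I1 * gg (snd ab) Y (I - I1))"
  proof (rule sum_mono)
    fix ab :: "'v \<times> 'v"
    have "Pr q F (dis (Blob w (fst ab) (snd ab)) (dis (NE (fst ab) Y I1) (NE (snd ab) Y (I - I1))))
        \<le> Pr q F (Blob w (fst ab) (snd ab)) * Pr q F (NE (fst ab) Y I1) * Pr q F (NE (snd ab) Y (I - I1))"
      by (intro BK3 incr_Blob incr_NE)
    also have "\<dots> \<le> Pr q F (Blob w (fst ab) (snd ab)) * gg (fst ab) Y I1 * gg (snd ab) Y (I - I1)"
      by (intro mult_mono Pr_NE I1 Pr_ge0 gg_ge0 mult_nonneg_nonneg order_refl)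
    finally show "Pr q F (dis (Blob w (fst ab) (snd ab)) (dis (NE (fst ab) Y I1) (NE (snd ab) Y (I - I1))))
        \<le> Pr q F (Blob w (fst ab) (snd ab)) * gg (fst ab) Y I1 * gg (snd ab) Y (I - I1)" .
  qed
  also have "\<dots> = (\<Sum>a\<in>X. \<Sum>b\<in>X. Pr q F (Blob w a b) * gg a Y I1 * gg b Y (I - I1))"
    by (simp add: sum.cartesian_product case_prod_beta)
  finally show ?thesis .
qed

end

context fv begin

lemma Mf_P1:
  assumes "finite I" "2 \<le> card I" "w \<in> X"
  shows "Mf w I \<le> (\<Sum>I1\<in>spl I. \<Sum>Y\<in>PiE I (\<lambda>_. X). Pr q F (R1ev w Y I1 (I - I1)))"
proof -
  have "Mf w I \<le> (\<Sum>Y\<in>PiE I (\<lambda>_. X). \<Sum>I1\<in>spl I. Pr q F (R1ev w Y I1 (I - I1)))"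
    unfolding Mf_def by (intro sum_mono P1 assms)
  also have "\<dots> = (\<Sum>I1\<in>spl I. \<Sum>Y\<in>PiE I (\<lambda>_. X). Pr q F (R1ev w Y I1 (I - I1)))"
    by (rule sum.swap)
  finally show ?thesis .
qed

lemma spl_props:
  assumes "finite I" "I1 \<in> spl I"
  shows "I1 \<subseteq> I" "finite I1" "1 \<le> card I1" "card I1 < card I" "card (I - I1) = card I - card I1"
    "finite (I - I1)" "1 \<le> card (I - I1)"
proof -
  show s: "I1 \<subseteq> I" using assms unfolding spl_def by auto
  show f: "finite I1" using s assms finite_subset by auto
  have ne: "I1 \<noteq> {}" using assms unfolding spl_def by auto
  then show "1 \<le> card I1" using f by (simp add: Suc_leI card_gt_0_iff)
  have "I1 \<noteq> I" using assms unfolding spl_def by auto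
  then show "card I1 < card I" using s assms(1) by (simp add: psubset_card_mono)
  show "card (I - I1) = card I - card I1" using s f by (simp add: card_Diff_subset)
  show "finite (I - I1)" using assms by simp
  have "I - I1 \<noteq> {}" using s \<open>I1 \<noteq> I\<close> by auto
  then show "1 \<le> card (I - I1)" using assms(1) by (simp add: Suc_leI card_gt_0_iff)
qed

lemma sum_R1:
  assumes I: "finite I" "I1 \<in> spl I"
  shows "(\<Sum>Y\<in>PiE I (\<lambda>_. X). Pr q F (R1ev w Y I1 (I - I1)))
     \<le> (\<Sum>u\<in>X. Pr q F (\<lambda>S. conn S w u) * (Mf u I1 * Mf u (I - I1)))"
proof -
  have s: "I1 \<subseteq> I" using spl_props[OF I] by simp
  have "(\<Sum>Y\<in>PiE I (\<lambda>_. X). Pr q F (R1ev w Y I1 (I - I1)))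
      \<le> (\<Sum>Y\<in>PiE I (\<lambda>_. X). \<Sum>u\<in>X. Pr q F (\<lambda>S. conn S w u) * (Pc u Y I1 * Pc u Y (I - I1)))"
    by (intro sum_mono order.trans[OF P2]) (simp add: mult.assoc)
  also have "\<dots> = (\<Sum>u\<in>X. Pr q F (\<lambda>S. conn S w u) * (\<Sum>Y\<in>PiE I (\<lambda>_. X). Pc u Y I1 * Pc u Y (I - I1)))"
    by (simp add: sum.swap[of _ "PiE I (\<lambda>_. X)"] sum_distrib_left)
  also have "\<dots> = (\<Sum>u\<in>X. Pr q F (\<lambda>S. conn S w u) * (Mf u I1 * Mf u (I - I1)))"
  proof (intro sum.cong refl arg_cong2[where f="(*)"])
    fix u
    show "(\<Sum>Y\<in>PiE I (\<lambda>_. X). Pc u Y I1 * Pc u Y (I - I1)) = Mf u I1 * Mf u (I - I1)"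
      unfolding Mf_def by (rule sum_PiE_split[OF I(1) s]) (auto intro: Pc_dep)
  qed
  finally show ?thesis .
qed

lemma sum_R2:
  assumes I: "finite I" "I1 \<in> spl I" and w: "w \<in> X"
  shows "(\<Sum>Y\<in>PiE I (\<lambda>_. X). Pr q F (R1ev w Y I1 (I - I1)))
     \<le> (\<Sum>a\<in>X. \<Sum>b\<in>X. Pr q F (Blob w a b) * (Gf a I1 * Gf b (I - I1)))"
proof -
  have s: "I1 \<subseteq> I" "finite I1" "finite (I - I1)" using spl_props[OF I] by simp_all
  have "(\<Sum>Y\<in>PiE I (\<lambda>_. X). Pr q F (R1ev w Y I1 (I - I1)))
      \<le> (\<Sum>Y\<in>PiE I (\<lambda>_. X). \<Sum>a\<in>X. \<Sum>b\<in>X. Pr q F (Blob w a b) * (gg a Y I1 * gg b Y (I - I1)))"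
    by (intro sum_mono order.trans[OF P3[OF I w]]) (simp add: mult.assoc)
  also have "\<dots> = (\<Sum>a\<in>X. \<Sum>b\<in>X. Pr q F (Blob w a b) * (\<Sum>Y\<in>PiE I (\<lambda>_. X). gg a Y I1 * gg b Y (I - I1)))"
    by (simp add: sum.swap[of _ "PiE I (\<lambda>_. X)"] sum_distrib_left)
  also have "\<dots> = (\<Sum>a\<in>X. \<Sum>b\<in>X. Pr q F (Blob w a b) * (Gf a I1 * Gf b (I - I1)))"
  proof (intro sum.cong refl arg_cong2[where f="(*)"])
    fix a b
    show "(\<Sum>Y\<in>PiE I (\<lambda>_. X). gg a Y I1 * gg b Y (I - I1)) = Gf a I1 * Gf b (I - I1)"
      unfolding Gf_def by (rule sum_PiE_split[OF I(1) s(1)]) (auto intro: gg_dep s)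
  qed
  finally show ?thesis .
qed

lemma Gf_split:
  assumes "finite I" "2 \<le> card I"
  shows "Gf a I = (\<Sum>I1\<in>spl I. Mf a I1 * Mf a (I - I1))"
proof -
  have "Gf a I = (\<Sum>Y\<in>PiE I (\<lambda>_. X). \<Sum>I1\<in>spl I. Pc a Y I1 * Pc a Y (I - I1))"
    unfolding Gf_def gg_def using assms by simp
  also have "\<dots> = (\<Sum>I1\<in>spl I. \<Sum>Y\<in>PiE I (\<lambda>_. X). Pc a Y I1 * Pc a Y (I - I1))"
    by (rule sum.swap)
  also have "\<dots> = (\<Sum>I1\<in>spl I. Mf a I1 * Mf a (I - I1))"
  proof (rule sum.cong[OF refl])
    fix I1 assume "I1 \<in> spl I"
    then have s: "I1 \<subseteq> I" using spl_props[OF assms(1)] by simp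
    show "(\<Sum>Y\<in>PiE I (\<lambda>_. X). Pc a Y I1 * Pc a Y (I - I1)) = Mf a I1 * Mf a (I - I1)"
      unfolding Mf_def by (rule sum_PiE_split[OF assms(1) s]) (auto intro: Pc_dep)
  qed
  finally show ?thesis .
qed

lemma Mf_single: "Mf u {i} = (\<Sum>y\<in>X. Pr q F (\<lambda>S. conn S u y))"
proof -
  have "Mf u {i} = (\<Sum>Y\<in>PiE {i} (\<lambda>_. X). Pr q F (\<lambda>S. conn S u (Y i)))"
    unfolding Mf_def Pc_def connall_def by simp
  also have "\<dots> = (\<Sum>y\<in>X. Pr q F (\<lambda>S. conn S u y))"
    by (rule sum_PiE_single)
  finally show ?thesis .
qed

lemma Gf_single: "a \<in> X \<Longrightarrow> Gf a {i} = 1"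
proof -
  assume a: "a \<in> X"
  have "Gf a {i} = (\<Sum>Y\<in>PiE {i} (\<lambda>_. X). ind (a = Y i))"
    unfolding Gf_def gg_def by simp
  also have "\<dots> = (\<Sum>y\<in>X. ind (a = y))"
    by (rule sum_PiE_single)
  also have "\<dots> = real (card {y\<in>X. a = y})" by (rule sum_ind_card[OF finX])
  also have "{y\<in>X. a = y} = {a}" using a by auto
  finally show ?thesis by simp
qed

end

lemma arith1: "1 \<le> (a::nat) \<Longrightarrow> k1 \<le> a div 2 \<Longrightarrow> 3 * k1 \<le> 2 * a - 1"
  by (cases "even a") (auto elim!: evenE oddE)
lemma arith2: "1 \<le> (a::nat) \<Longrightarrow> k1 \<le> (a - 1) div 2 \<Longrightarrow> 3 * k1 \<le> 2 * a - 2"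
  by (cases "even a") (auto elim!: evenE oddE)
lemma arith_G: "1 \<le> (a::nat) \<Longrightarrow> 1 \<le> b \<Longrightarrow> k \<le> (a + b - 1) div 2 \<Longrightarrow> k - min k (a div 2) \<le> b div 2"
  by (cases "even a"; cases "even b") (auto elim!: evenE oddE simp: min_def)
lemma arith_A2: "1 \<le> (a::nat) \<Longrightarrow> 1 \<le> b \<Longrightarrow> k \<le> (a + b) div 2 \<Longrightarrow> \<not> k \<le> a div 2 + b div 2 \<Longrightarrow>
    1 \<le> k \<and> k - 1 - min (k - 1) ((a - 1) div 2) \<le> (b - 1) div 2"
  by (cases "even a"; cases "even b") (auto elim!: evenE oddE simp: min_def)
lemma arith_A1: "k \<le> a div 2 + b div 2 \<Longrightarrow> k - min k (a div 2) \<le> (b::nat) div 2"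
  by (auto simp: min_def)

lemma PiE_filter: "{Y\<in>PiE A (\<lambda>_. X). \<forall>i\<in>A. P (Y i)} = PiE A (\<lambda>_. {x. P x} \<inter> X)"
  by (auto simp: PiE_iff extensional_def)

lemma ex_G: "3*k1 \<le> 2*a-1 \<Longrightarrow> 3*k2 \<le> 2*b-1 \<Longrightarrow> 1 \<le> (a::nat) \<Longrightarrow> 1 \<le> b \<Longrightarrow> a+b = r \<Longrightarrow> k1+k2 = k \<Longrightarrow>
   (2*a-1-3*k1) + (2*b-1-3*k2) = 2*r-2-3*k"
  by simp
lemma ex_A1: "3*k1 \<le> 2*a-1 \<Longrightarrow> 3*k2 \<le> 2*b-1 \<Longrightarrow> 1 \<le> (a::nat) \<Longrightarrow> 1 \<le> b \<Longrightarrow> a+b = r \<Longrightarrow> k1+k2 = k \<Longrightarrow>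
   1 + (2*a-1-3*k1) + (2*b-1-3*k2) = 2*r-1-3*k"
  by simp
lemma ex_A2: "3*k1 \<le> 2*a-2 \<Longrightarrow> 3*k2 \<le> 2*b-2 \<Longrightarrow> 1 \<le> (a::nat) \<Longrightarrow> 1 \<le> b \<Longrightarrow> a+b = r \<Longrightarrow> 1+k1+k2 = k \<Longrightarrow>
   (2*a-2-3*k1) + (2*b-2-3*k2) = 2*r-1-3*k"
  by simp

lemma pow_combine: "(x::real) * m^k1 * c^e1 * (y * m^k2 * c^e2) = x * y * m^(k1+k2) * c^(e1+e2)"
  by (simp add: power_add algebra_simps)

context fv begin

lemma sum_conn_EE:
  "(\<Sum>y\<in>X. Pr q F (\<lambda>S. conn S u y)) = EE q F (\<lambda>S. real (card ({x. conn S u x} \<inter> X)))"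
proof -
  have "(\<Sum>y\<in>X. Pr q F (\<lambda>S. conn S u y)) = EE q F (\<lambda>S. \<Sum>y\<in>X. ind (conn S u y))"
    unfolding Pr_def by (simp add: EE_sum)
  also have "\<dots> = EE q F (\<lambda>S. real (card ({x. conn S u x} \<inter> X)))"
  proof (rule EE_cong)
    fix S
    have "{y\<in>X. conn S u y} = {x. conn S u x} \<inter> X" by auto
    then show "(\<Sum>y\<in>X. ind (conn S u y)) = real (card ({x. conn S u x} \<inter> X))"
      using sum_ind_card[OF finX, of "conn S u"] by simp
  qed
  finally show ?thesis .
qed

lemma sum_blob_EE:
  "(\<Sum>a\<in>X. \<Sum>b\<in>X. Pr q F (Blob u a b)) = EE q F (\<lambda>S. real (card ({x. conn S u x} \<inter> X)) ^ 2)"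
proof -
  have "(\<Sum>a\<in>X. \<Sum>b\<in>X. Pr q F (Blob u a b)) = EE q F (\<lambda>S. \<Sum>a\<in>X. \<Sum>b\<in>X. ind (Blob u a b S))"
    unfolding Pr_def by (simp add: EE_sum)
  also have "\<dots> = EE q F (\<lambda>S. real (card ({x. conn S u x} \<inter> X)) ^ 2)"
  proof (rule EE_cong)
    fix S
    have "(\<Sum>a\<in>X. \<Sum>b\<in>X. ind (Blob u a b S)) = (\<Sum>a\<in>X. ind (conn S u a)) * (\<Sum>b\<in>X. ind (conn S u b))"
      unfolding sum_product Blob_def by (intro sum.cong refl) (simp add: ind_def)
    also have "(\<Sum>a\<in>X. ind (conn S u a)) = real (card ({x. conn S u x} \<inter> X))"
    proof -
      have "{y\<in>X. conn S u y} = {x. conn S u x} \<inter> X" by auto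
      then show ?thesis using sum_ind_card[OF finX, of "conn S u"] by simp
    qed
    finally show "(\<Sum>a\<in>X. \<Sum>b\<in>X. ind (Blob u a b S)) = real (card ({x. conn S u x} \<inter> X)) ^ 2"
      by (simp add: power2_eq_square)
  qed
  finally show ?thesis .
qed

lemma Mf_EE:
  "Mf v {..<p} = EE q F (\<lambda>S. real (card ({x. conn S v x} \<inter> X)) ^ p)"
proof -
  have "Mf v {..<p} = EE q F (\<lambda>S. \<Sum>Y\<in>PiE {..<p} (\<lambda>_. X). ind (connall S v Y {..<p}))"
    unfolding Mf_def Pc_def Pr_def by (simp add: EE_sum)
  also have "\<dots> = EE q F (\<lambda>S. real (card ({x. conn S v x} \<inter> X)) ^ p)"
  proof (rule EE_cong)
    fix S
    have fP: "finite (PiE {..<p} (\<lambda>_. X))" using finX by (simp add: finite_PiE)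
    have "{Y\<in>PiE {..<p} (\<lambda>_. X). connall S v Y {..<p}} = PiE {..<p} (\<lambda>_. {x. conn S v x} \<inter> X)"
      unfolding connall_def by (rule PiE_filter)
    then have "(\<Sum>Y\<in>PiE {..<p} (\<lambda>_. X). ind (connall S v Y {..<p}))
        = real (card (PiE {..<p} (\<lambda>_. {x. conn S v x} \<inter> X)))"
      using sum_ind_card[OF fP, of "\<lambda>Y. connall S v Y {..<p}"] by simp
    also have "\<dots> = real (card ({x. conn S v x} \<inter> X)) ^ p"
      by (simp add: card_PiE)
    finally show "(\<Sum>Y\<in>PiE {..<p} (\<lambda>_. X). ind (connall S v Y {..<p})) = real (card ({x. conn S v x} \<inter> X)) ^ p" .
  qed
  finally show ?thesis .
qed

end

locale fvb = fv +
  fixes chi M2 :: real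
  assumes chi0: "0 \<le> chi" and M20: "0 \<le> M2"
    and hchi: "\<And>u. u \<in> X \<Longrightarrow> (\<Sum>y\<in>X. Pr q F (\<lambda>S. conn S u y)) \<le> chi"
    and hM2: "\<And>u. u \<in> X \<Longrightarrow> (\<Sum>a\<in>X. \<Sum>b\<in>X. Pr q F (Blob u a b)) \<le> M2"
begin

definition B :: "nat \<Rightarrow> nat \<Rightarrow> real" where
  "B r k = real (odd_dfact r) * M2^k * chi^(2*r-1-3*k)"

definition GB :: "nat \<Rightarrow> nat \<Rightarrow> real" where
  "GB r k = real (odd_dfact r) * M2^k * chi^(2*r-2-3*k)"

lemma B_ge0: "0 \<le> B r k" unfolding B_def using chi0 M20 by simp
lemma GB_ge0: "0 \<le> GB r k" unfolding GB_def using chi0 M20 by simp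

lemma G_term:
  assumes IH: "\<And>r' k u I. r' < r \<Longrightarrow> 1 \<le> r' \<Longrightarrow> k \<le> r' div 2 \<Longrightarrow> u \<in> X \<Longrightarrow> finite I \<Longrightarrow> card I = r'
      \<Longrightarrow> Mf u I \<le> B r' k"
    and I: "finite I" "card I = r" "I1 \<in> spl I" and a: "a \<in> X" and k: "k \<le> (r - 1) div 2"
  shows "Mf a I1 * Mf a (I - I1) \<le> real (odd_dfact (card I1) * odd_dfact (r - card I1)) * M2^k * chi^(2*r-2-3*k)"
proof -
  note sp = spl_props[OF I(1,3)]
  define a1 where "a1 = card I1"
  define b1 where "b1 = r - a1"
  have ab: "1 \<le> a1" "1 \<le> b1" "a1 < r" "b1 < r" "card (I - I1) = b1" "a1 + b1 = r"
    using sp I unfolding a1_def b1_def by auto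
  define k1 where "k1 = min k (a1 div 2)"
  define k2 where "k2 = k - k1"
  have k1: "k1 \<le> a1 div 2" unfolding k1_def by simp
  have k2: "k2 \<le> b1 div 2" unfolding k2_def k1_def using arith_G[of a1 b1 k] ab k by simp
  have m1: "Mf a I1 \<le> B a1 k1" using IH[of a1 k1 a I1] ab k1 a sp unfolding a1_def by simp
  have m2: "Mf a (I - I1) \<le> B b1 k2" using IH[of b1 k2 a "I - I1"] ab k2 a sp by simp
  have "Mf a I1 * Mf a (I - I1) \<le> B a1 k1 * B b1 k2"
    by (rule mult_mono[OF m1 m2 B_ge0 Mf_ge0])
  also have "\<dots> = real (odd_dfact a1 * odd_dfact b1) * M2^(k1+k2) * chi^((2*a1-1-3*k1) + (2*b1-1-3*k2))"
    unfolding B_def by (simp add: pow_combine)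
  also have "k1 + k2 = k" unfolding k2_def k1_def by simp
  also have "(2*a1-1-3*k1) + (2*b1-1-3*k2) = 2*r-2-3*k"
    by (rule ex_G[OF arith1[OF ab(1) k1] arith1[OF ab(2) k2] ab(1,2,6) \<open>k1 + k2 = k\<close>])
  finally show ?thesis unfolding a1_def b1_def .
qed

lemma A_term:
  assumes IHA: "\<And>r' k u I. r' < r \<Longrightarrow> 1 \<le> r' \<Longrightarrow> k \<le> r' div 2 \<Longrightarrow> u \<in> X \<Longrightarrow> finite I \<Longrightarrow> card I = r'
      \<Longrightarrow> Mf u I \<le> B r' k"
    and IHG: "\<And>r' k u I. r' < r \<Longrightarrow> 1 \<le> r' \<Longrightarrow> k \<le> (r' - 1) div 2 \<Longrightarrow> u \<in> X \<Longrightarrow> finite I \<Longrightarrow> card I = r'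
      \<Longrightarrow> Gf u I \<le> GB r' k"
    and I: "finite I" "card I = r" "I1 \<in> spl I" and w: "w \<in> X" and k: "k \<le> r div 2"
  shows "(\<Sum>Y\<in>PiE I (\<lambda>_. X). Pr q F (R1ev w Y I1 (I - I1)))
     \<le> real (odd_dfact (card I1) * odd_dfact (r - card I1)) * M2^k * chi^(2*r-1-3*k)"
proof -
  note sp = spl_props[OF I(1,3)]
  define a1 where "a1 = card I1"
  define b1 where "b1 = r - a1"
  have ab: "1 \<le> a1" "1 \<le> b1" "a1 < r" "b1 < r" "card (I - I1) = b1" "a1 + b1 = r"
    using sp I unfolding a1_def b1_def by auto
  show ?thesis
  proof (cases "k \<le> a1 div 2 + b1 div 2")
    case True
    define k1 where "k1 = min k (a1 div 2)"
    define k2 where "k2 = k - k1"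
    have k1: "k1 \<le> a1 div 2" unfolding k1_def by simp
    have k2: "k2 \<le> b1 div 2" unfolding k2_def k1_def using arith_A1[OF True] by simp
    have mm: "Mf u I1 * Mf u (I - I1) \<le> B a1 k1 * B b1 k2" if "u \<in> X" for u
    proof -
      have m1: "Mf u I1 \<le> B a1 k1" using IHA[of a1 k1 u I1] ab k1 that sp unfolding a1_def by simp
      have m2: "Mf u (I - I1) \<le> B b1 k2" using IHA[of b1 k2 u "I - I1"] ab k2 that sp by simp
      show ?thesis by (rule mult_mono[OF m1 m2 B_ge0 Mf_ge0])
    qed
    have "(\<Sum>Y\<in>PiE I (\<lambda>_. X). Pr q F (R1ev w Y I1 (I - I1)))
        \<le> (\<Sum>u\<in>X. Pr q F (\<lambda>S. conn S w u) * (Mf u I1 * Mf u (I - I1)))"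
      by (rule sum_R1[OF I(1,3)])
    also have "\<dots> \<le> (\<Sum>u\<in>X. Pr q F (\<lambda>S. conn S w u) * (B a1 k1 * B b1 k2))"
      by (intro sum_mono mult_left_mono mm Pr_ge0)
    also have "\<dots> = (\<Sum>u\<in>X. Pr q F (\<lambda>S. conn S w u)) * (B a1 k1 * B b1 k2)"
      by (simp add: sum_distrib_right)
    also have "\<dots> \<le> chi * (B a1 k1 * B b1 k2)"
      by (intro mult_right_mono hchi w mult_nonneg_nonneg B_ge0)
    also have "\<dots> = real (odd_dfact a1 * odd_dfact b1) * M2^(k1+k2) * chi^(1 + (2*a1-1-3*k1) + (2*b1-1-3*k2))"
      unfolding B_def by (simp add: power_add algebra_simps)
    also have "k1 + k2 = k" unfolding k2_def k1_def by simp
    also have "1 + (2*a1-1-3*k1) + (2*b1-1-3*k2) = 2*r-1-3*k"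
      by (rule ex_A1[OF arith1[OF ab(1) k1] arith1[OF ab(2) k2] ab(1,2,6) \<open>k1 + k2 = k\<close>])
    finally show ?thesis unfolding a1_def b1_def .
  next
    case False
    have k': "k \<le> (a1 + b1) div 2" using k ab(6) by simp
    have kk: "1 \<le> k \<and> k - 1 - min (k - 1) ((a1 - 1) div 2) \<le> (b1 - 1) div 2"
      by (rule arith_A2[OF ab(1) ab(2) k' False])
    define k1 where "k1 = min (k - 1) ((a1 - 1) div 2)"
    define k2 where "k2 = k - 1 - k1"
    have k1: "k1 \<le> (a1 - 1) div 2" unfolding k1_def by simp
    have k2: "k2 \<le> (b1 - 1) div 2" unfolding k2_def k1_def using kk by blast
    have gg: "Gf a I1 * Gf b (I - I1) \<le> GB a1 k1 * GB b1 k2" if "a \<in> X" "b \<in> X" for a b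
    proof -
      have m1: "Gf a I1 \<le> GB a1 k1" using IHG[of a1 k1 a I1] ab k1 that sp unfolding a1_def by simp
      have m2: "Gf b (I - I1) \<le> GB b1 k2" using IHG[of b1 k2 b "I - I1"] ab k2 that sp by simp
      show ?thesis by (rule mult_mono[OF m1 m2 GB_ge0 Gf_ge0])
    qed
    have "(\<Sum>Y\<in>PiE I (\<lambda>_. X). Pr q F (R1ev w Y I1 (I - I1)))
        \<le> (\<Sum>a\<in>X. \<Sum>b\<in>X. Pr q F (Blob w a b) * (Gf a I1 * Gf b (I - I1)))"
      by (rule sum_R2[OF I(1,3) w])
    also have "\<dots> \<le> (\<Sum>a\<in>X. \<Sum>b\<in>X. Pr q F (Blob w a b) * (GB a1 k1 * GB b1 k2))"
      by (intro sum_mono mult_left_mono gg Pr_ge0)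
    also have "\<dots> = (\<Sum>a\<in>X. \<Sum>b\<in>X. Pr q F (Blob w a b)) * (GB a1 k1 * GB b1 k2)"
      by (simp add: sum_distrib_right)
    also have "\<dots> \<le> M2 * (GB a1 k1 * GB b1 k2)"
      by (intro mult_right_mono hM2 w mult_nonneg_nonneg GB_ge0)
    also have "\<dots> = real (odd_dfact a1 * odd_dfact b1) * M2^(1+k1+k2) * chi^((2*a1-2-3*k1) + (2*b1-2-3*k2))"
      unfolding GB_def by (simp add: power_add algebra_simps)
    also have "1 + k1 + k2 = k" unfolding k2_def k1_def using kk by linarith
    also have "(2*a1-2-3*k1) + (2*b1-2-3*k2) = 2*r-1-3*k"
      by (rule ex_A2[OF arith2[OF ab(1) k1] arith2[OF ab(2) k2] ab(1,2,6) \<open>1 + k1 + k2 = k\<close>])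
    finally show ?thesis unfolding a1_def b1_def .
  qed
qed

lemma main_ind:
  "1 \<le> r \<Longrightarrow> (\<forall>k u I. k \<le> r div 2 \<longrightarrow> u \<in> X \<longrightarrow> finite I \<longrightarrow> card I = r \<longrightarrow> Mf u I \<le> B r k) \<and>
     (\<forall>k u I. k \<le> (r - 1) div 2 \<longrightarrow> u \<in> X \<longrightarrow> finite I \<longrightarrow> card I = r \<longrightarrow> Gf u I \<le> GB r k)"
proof (induction r rule: less_induct)
  case (less r)
  have IHA: "\<And>r' k u I. r' < r \<Longrightarrow> 1 \<le> r' \<Longrightarrow> k \<le> r' div 2 \<Longrightarrow> u \<in> X \<Longrightarrow> finite I \<Longrightarrow> card I = r'
      \<Longrightarrow> Mf u I \<le> B r' k" using less.IH by blast
  have IHG: "\<And>r' k u I. r' < r \<Longrightarrow> 1 \<le> r' \<Longrightarrow> k \<le> (r' - 1) div 2 \<Longrightarrow> u \<in> X \<Longrightarrow> finite I \<Longrightarrow> card I = r'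
      \<Longrightarrow> Gf u I \<le> GB r' k" using less.IH by blast
  show ?case
  proof (cases "r = 1")
    case True
    show ?thesis
    proof (intro conjI allI impI)
      fix k :: nat and u and I :: "nat set" assume h: "k \<le> r div 2" "u \<in> X" "finite I" "card I = r"
      then obtain i where i: "I = {i}" using True by (meson card_1_singletonE)
      have "k = 0" using h True by simp
      then show "Mf u I \<le> B r k" unfolding i Mf_single B_def using True hchi[OF h(2)] by (simp add: odd_dfact_def)
    next
      fix k :: nat and u and I :: "nat set" assume h: "k \<le> (r - 1) div 2" "u \<in> X" "finite I" "card I = r"
      then obtain i where i: "I = {i}" using True by (meson card_1_singletonE)
      have "k = 0" using h True by simp
      then show "Gf u I \<le> GB r k" unfolding i GB_def using True Gf_single[OF h(2)] by (simp add: odd_dfact_def)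
    qed
  next
    case False
    then have r2: "2 \<le> r" using less.prems by simp
    show ?thesis
    proof (intro conjI allI impI)
      fix k :: nat and u and I :: "nat set" assume h: "k \<le> r div 2" "u \<in> X" "finite I" "card I = r"
      have "Mf u I \<le> (\<Sum>I1\<in>spl I. \<Sum>Y\<in>PiE I (\<lambda>_. X). Pr q F (R1ev u Y I1 (I - I1)))"
        by (rule Mf_P1) (use h r2 in auto)
      also have "\<dots> \<le> (\<Sum>I1\<in>spl I. real (odd_dfact (card I1) * odd_dfact (r - card I1)) * M2^k * chi^(2*r-1-3*k))"
        by (intro sum_mono A_term[OF IHA IHG]) (use h in auto)
      also have "\<dots> = (\<Sum>I1\<in>spl I. real (odd_dfact (card I1) * odd_dfact (r - card I1))) * (M2^k * chi^(2*r-1-3*k))"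
        by (simp add: sum_distrib_right mult.assoc)
      also have "\<dots> = B r k" unfolding B_def spl_count[OF h(3,4) r2] by (simp add: mult.assoc)
      finally show "Mf u I \<le> B r k" .
    next
      fix k :: nat and u and I :: "nat set" assume h: "k \<le> (r - 1) div 2" "u \<in> X" "finite I" "card I = r"
      have "Gf u I = (\<Sum>I1\<in>spl I. Mf u I1 * Mf u (I - I1))"
        by (rule Gf_split) (use h r2 in auto)
      also have "\<dots> \<le> (\<Sum>I1\<in>spl I. real (odd_dfact (card I1) * odd_dfact (r - card I1)) * M2^k * chi^(2*r-2-3*k))"
        by (intro sum_mono G_term[OF IHA]) (use h in auto)
      also have "\<dots> = (\<Sum>I1\<in>spl I. real (odd_dfact (card I1) * odd_dfact (r - card I1))) * (M2^k * chi^(2*r-2-3*k))"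
        by (simp add: sum_distrib_right mult.assoc)
      also have "\<dots> = GB r k" unfolding GB_def spl_count[OF h(3,4) r2] by (simp add: mult.assoc)
      finally show "Gf u I \<le> GB r k" .
    qed
  qed
qed

lemma fv_final:
  assumes "v \<in> X" "1 \<le> p" "k \<le> p div 2"
  shows "EE q F (\<lambda>S. real (card ({x. conn S v x} \<inter> X)) ^ p) \<le> real (odd_dfact p) * M2^k * chi^(2*p-1-3*k)"
  using main_ind[OF assms(2)] assms unfolding Mf_EE[symmetric] B_def by auto

end

definition qq :: "real \<Rightarrow> ('v \<Rightarrow> 'v \<Rightarrow> real) \<Rightarrow> 'v set \<Rightarrow> real" where
  "qq \<beta> J e = 1 - exp (- \<beta> * edge_weight J e)"

definition MM :: "real \<Rightarrow> ('v \<Rightarrow> 'v \<Rightarrow> real) \<Rightarrow> 'v set \<Rightarrow> bool measure" where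
  "MM \<beta> J e = measure_pmf (bernoulli_pmf (qq \<beta> J e))"

lemma perc_eq: "perc \<beta> J = PiM edges (MM \<beta> J)"
  unfolding perc_def MM_def qq_def by simp

lemma edges_iff: "e \<in> edges \<longleftrightarrow> (\<exists>x y. x \<noteq> y \<and> e = {x, y})"
  unfolding edges_def by simp

lemma edge_weight_eq:
  assumes "weighted_graph J" "x \<noteq> y"
  shows "edge_weight J {x, y} = J x y"
  unfolding edge_weight_def
proof (rule the_equality)
  show "\<exists>a b. a \<noteq> b \<and> {x, y} = {a, b} \<and> J x y = J a b" using assms(2) by blast
next
  fix w assume "\<exists>a b. a \<noteq> b \<and> {x, y} = {a, b} \<and> w = J a b"
  then obtain a b where ab: "{x, y} = {a, b}" "w = J a b" by blast
  then have "(x = a \<and> y = b) \<or> (x = b \<and> y = a)" by (metis doubleton_eq_iff)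
  then show "w = J x y" using ab assms(1) unfolding weighted_graph_def by auto
qed

lemma edge_weight_nonneg:
  assumes "weighted_graph J" "e \<in> edges"
  shows "0 \<le> edge_weight J e"
proof -
  obtain x y where "x \<noteq> y" "e = {x, y}" using assms(2) unfolding edges_iff by blast
  then show ?thesis using edge_weight_eq[OF assms(1)] assms(1) unfolding weighted_graph_def by simp
qed

lemma qq_bounds:
  assumes "weighted_graph J" "0 \<le> \<beta>" "e \<in> edges"
  shows "0 \<le> qq \<beta> J e" "qq \<beta> J e \<le> 1"
proof -
  have "0 \<le> \<beta> * edge_weight J e" using edge_weight_nonneg[OF assms(1,3)] assms(2) by simp
  then have "exp (- \<beta> * edge_weight J e) \<le> 1" by simp
  then show "0 \<le> qq \<beta> J e" unfolding qq_def by simp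
  show "qq \<beta> J e \<le> 1" unfolding qq_def by simp
qed

lemma qok_perc:
  assumes "weighted_graph J" "0 \<le> \<beta>" "F \<subseteq> edges"
  shows "qok (qq \<beta> J) F"
  unfolding qok_def using qq_bounds[OF assms(1,2)] assms(3) by auto

lemma prob_MM: "prob_space (MM \<beta> J e)"
  unfolding MM_def by (rule prob_space_measure_pmf)

lemma prob_perc: "prob_space (perc \<beta> J)"
  unfolding perc_eq by (rule prob_space_PiM) (rule prob_MM)

lemma space_perc: "space (perc \<beta> J) = PiE edges (\<lambda>_. UNIV)"
  unfolding perc_eq by (simp add: space_PiM MM_def)

lemma sets_MM [simp]: "sets (MM \<beta> J e) = UNIV"
  unfolding MM_def by simp

definition Cyl :: "real \<Rightarrow> ('v \<Rightarrow> 'v \<Rightarrow> real) \<Rightarrow> 'v set set \<Rightarrow> 'v set set \<Rightarrow> ('v set \<Rightarrow> bool) set" where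
  "Cyl \<beta> J F S = prod_emb edges (MM \<beta> J) F (PiE F (\<lambda>e. {b. b = (e \<in> S)}))"

lemma Cyl_sets:
  assumes "finite F" "F \<subseteq> edges"
  shows "Cyl \<beta> J F S \<in> sets (perc \<beta> J)"
  unfolding Cyl_def perc_eq by (rule sets_PiM_I) (use assms in auto)

lemma Cyl_iff:
  assumes "S \<subseteq> F" "\<omega> \<in> space (perc \<beta> J)"
  shows "\<omega> \<in> Cyl \<beta> J F S \<longleftrightarrow> {e\<in>F. \<omega> e} = S"
proof -
  have "\<omega> \<in> Cyl \<beta> J F S \<longleftrightarrow> (\<forall>e\<in>F. \<omega> e = (e \<in> S))"
    using assms(2) unfolding Cyl_def prod_emb_def perc_eq by (auto simp: PiE_iff space_PiM)
  also have "\<dots> \<longleftrightarrow> {e\<in>F. \<omega> e} = S" using assms(1) by auto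
  finally show ?thesis .
qed

lemma Cyl_measure:
  assumes "weighted_graph J" "0 \<le> \<beta>" "finite F" "F \<subseteq> edges" "S \<subseteq> F"
  shows "emeasure (perc \<beta> J) (Cyl \<beta> J F S) = ennreal (mu (qq \<beta> J) F S)"
proof -
  have "emeasure (perc \<beta> J) (Cyl \<beta> J F S) = (\<Prod>e\<in>F. emeasure (MM \<beta> J e) {b. b = (e \<in> S)})"
    unfolding Cyl_def perc_eq by (rule emeasure_PiM_emb) (use assms prob_MM in auto)
  also have "\<dots> = (\<Prod>e\<in>F. ennreal (if e \<in> S then qq \<beta> J e else 1 - qq \<beta> J e))"
  proof (rule prod.cong[OF refl])
    fix e assume e: "e \<in> F"
    have b: "0 \<le> qq \<beta> J e" "qq \<beta> J e \<le> 1" using qq_bounds[OF assms(1,2)] e assms(4) by auto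
    have "{b. b = (e \<in> S)} = {e \<in> S}" by auto
    then show "emeasure (MM \<beta> J e) {b. b = (e \<in> S)} = ennreal (if e \<in> S then qq \<beta> J e else 1 - qq \<beta> J e)"
      unfolding MM_def using b by (simp add: emeasure_pmf_single)
  qed
  also have "\<dots> = ennreal (\<Prod>e\<in>F. (if e \<in> S then qq \<beta> J e else 1 - qq \<beta> J e))"
    using qq_bounds[OF assms(1,2)] assms(4) by (intro prod_ennreal) auto
  also have "(\<Prod>e\<in>F. (if e \<in> S then qq \<beta> J e else 1 - qq \<beta> J e)) = mu (qq \<beta> J) F S"
  proof -
    have "(\<Prod>e\<in>F. (if e \<in> S then qq \<beta> J e else 1 - qq \<beta> J e))
        = (\<Prod>e\<in>F \<inter> S. qq \<beta> J e) * (\<Prod>e\<in>F - S. 1 - qq \<beta> J e)"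
      using assms(3) by (simp add: prod.If_cases Diff_eq)
    also have "F \<inter> S = S" using assms(5) by auto
    finally show ?thesis unfolding mu_def .
  qed
  finally show ?thesis .
qed

lemma fun_as_sum:
  assumes "finite F" "\<omega> \<in> space (perc \<beta> J)"
  shows "ennreal (h {e\<in>F. \<omega> e}) = (\<Sum>S\<in>Pow F. ennreal (h S) * indicator (Cyl \<beta> J F S) \<omega>)"
proof -
  have "(\<Sum>S\<in>Pow F. ennreal (h S) * indicator (Cyl \<beta> J F S) \<omega>)
      = (\<Sum>S\<in>Pow F. if S = {e\<in>F. \<omega> e} then ennreal (h S) else 0)"
    by (intro sum.cong refl) (auto simp: Cyl_iff[OF _ assms(2)])
  also have "\<dots> = ennreal (h {e\<in>F. \<omega> e})"
    using assms(1) by (simp add: sum.delta')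
  finally show ?thesis by simp
qed

lemma transfer_meas:
  assumes "finite F" "F \<subseteq> edges"
  shows "(\<lambda>\<omega>. ennreal (h {e\<in>F. \<omega> e})) \<in> borel_measurable (perc \<beta> J)"
proof -
  have "(\<lambda>\<omega>. \<Sum>S\<in>Pow F. ennreal (h S) * indicator (Cyl \<beta> J F S) \<omega>) \<in> borel_measurable (perc \<beta> J)"
    using Cyl_sets[OF assms] by measurable
  then show ?thesis by (subst measurable_cong[OF fun_as_sum[OF assms(1)]])
qed

lemma transfer:
  assumes "weighted_graph J" "0 \<le> \<beta>" "finite F" "F \<subseteq> edges" "\<And>S. 0 \<le> h S"
  shows "(\<integral>\<^sup>+ \<omega>. ennreal (h {e\<in>F. \<omega> e}) \<partial>perc \<beta> J) = ennreal (EE (qq \<beta> J) F h)"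
proof -
  have "(\<integral>\<^sup>+ \<omega>. ennreal (h {e\<in>F. \<omega> e}) \<partial>perc \<beta> J)
      = (\<integral>\<^sup>+ \<omega>. (\<Sum>S\<in>Pow F. ennreal (h S) * indicator (Cyl \<beta> J F S) \<omega>) \<partial>perc \<beta> J)"
    by (rule nn_integral_cong) (rule fun_as_sum[OF assms(3)])
  also have "\<dots> = (\<Sum>S\<in>Pow F. \<integral>\<^sup>+ \<omega>. ennreal (h S) * indicator (Cyl \<beta> J F S) \<omega> \<partial>perc \<beta> J)"
    by (rule nn_integral_sum) (use Cyl_sets[OF assms(3,4)] in measurable)
  also have "\<dots> = (\<Sum>S\<in>Pow F. ennreal (h S) * ennreal (mu (qq \<beta> J) F S))"
    by (intro sum.cong refl) (simp add: nn_integral_cmult_indicator Cyl_sets[OF assms(3,4)] Cyl_measure[OF assms(1-4)])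
  also have "\<dots> = ennreal (\<Sum>S\<in>Pow F. mu (qq \<beta> J) F S * h S)"
  proof -
    have "\<And>S. S \<in> Pow F \<Longrightarrow> 0 \<le> mu (qq \<beta> J) F S"
      using mu_nonneg[OF qok_perc[OF assms(1,2,4)]] by auto
    then show ?thesis using assms(5)
      by (subst sum_ennreal[symmetric]) (auto intro!: sum.cong simp: ennreal_mult'' mult.commute)
  qed
  finally show ?thesis unfolding EE_def .
qed

lemma ennreal_all_nat_le_top:
  fixes x :: ennreal
  assumes "\<And>m::nat. ennreal (real m) \<le> x"
  shows "x = \<top>"
proof (rule ccontr)
  assume "x \<noteq> \<top>"
  then obtain r where r: "x = ennreal r" "0 \<le> r" by (cases x) auto
  obtain m :: nat where "r < real m" using reals_Archimedean2 by blast
  moreover have "ennreal (real m) \<le> ennreal r" using assms[of m] r by simp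
  then have "real m \<le> r" using r by (simp add: ennreal_le_iff)
  ultimately show False by simp
qed

lemma finite_cover:
  fixes A :: "nat \<Rightarrow> 'a set"
  assumes mono: "\<And>n m. n \<le> m \<Longrightarrow> A n \<subseteq> A m" and exh: "\<And>x. x \<in> K \<Longrightarrow> \<exists>n. x \<in> A n"
    and "finite B" "B \<subseteq> K"
  shows "\<exists>N. B \<subseteq> A N"
  using assms(3,4)
proof (induction B rule: finite_induct)
  case empty then show ?case by auto
next
  case (insert x B)
  then obtain N where N: "B \<subseteq> A N" by auto
  obtain n where n: "x \<in> A n" using exh[of x] insert.prems by auto
  have a: "A N \<subseteq> A (max N n)" by (rule mono) simp
  have b: "A n \<subseteq> A (max N n)" by (rule mono) simp
  have "B \<subseteq> A (max N n)" "x \<in> A (max N n)" using N n a b by auto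
  then show ?case by blast
qed

lemma sup_card_pow:
  fixes A :: "nat \<Rightarrow> 'a set"
  assumes mono: "\<And>n m. n \<le> m \<Longrightarrow> A n \<subseteq> A m" and sub: "\<And>n. A n \<subseteq> K"
    and fin: "\<And>n. finite (A n)" and exh: "\<And>x. x \<in> K \<Longrightarrow> \<exists>n. x \<in> A n" and p: "1 \<le> p"
  shows "(if finite K then ennreal (real (card K)) else \<infinity>) ^ p = (SUP n. ennreal (real (card (A n)) ^ p))"
proof (cases "finite K")
  case True
  obtain N where N: "K \<subseteq> A N" using finite_cover[OF mono exh True order_refl] by blast
  have AN: "A N = K" using N sub by auto
  have le: "ennreal (real (card (A n)) ^ p) \<le> ennreal (real (card K) ^ p)" for n
    using card_mono[OF True sub[of n]] by (simp add: power_mono)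
  have "(SUP n. ennreal (real (card (A n)) ^ p)) = ennreal (real (card K) ^ p)"
  proof (rule antisym)
    show "(SUP n. ennreal (real (card (A n)) ^ p)) \<le> ennreal (real (card K) ^ p)"
      by (rule SUP_least) (rule le)
    show "ennreal (real (card K) ^ p) \<le> (SUP n. ennreal (real (card (A n)) ^ p))"
      using SUP_upper[of N UNIV "\<lambda>n. ennreal (real (card (A n)) ^ p)"] AN by simp
  qed
  then show ?thesis using True by (simp add: ennreal_power)
next
  case False
  have "(SUP n. ennreal (real (card (A n)) ^ p)) = \<top>"
  proof (rule ennreal_all_nat_le_top)
    fix m :: nat
    obtain B where B: "B \<subseteq> K" "finite B" "card B = m"
      using infinite_arbitrarily_large[OF False] by blast
    obtain N where N: "B \<subseteq> A N" using finite_cover[OF mono exh B(2,1)] by blast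
    have "m \<le> card (A N)" using card_mono[OF fin N] B by simp
    moreover have "real (card (A N)) \<le> real (card (A N)) ^ p"
    proof (cases "card (A N) = 0")
      case False
      then have "1 \<le> real (card (A N))" by simp
      then show ?thesis using p by (metis power_one_right power_increasing)
    qed simp
    ultimately have "ennreal (real m) \<le> ennreal (real (card (A N)) ^ p)"
      by (intro ennreal_leI) simp
    also have "\<dots> \<le> (SUP n. ennreal (real (card (A n)) ^ p))" by (rule SUP_upper) simp
    finally show "ennreal (real m) \<le> (SUP n. ennreal (real (card (A n)) ^ p))" .
  qed
  note sup = this
  have lhs: "(if finite K then ennreal (real (card K)) else \<infinity>) ^ p = \<top>"
    using False p by (simp add: power_eq_top_ennreal)
  show ?thesis unfolding sup lhs by (rule refl)
qed

definition VV :: "nat \<Rightarrow> 'v::countable set" where "VV n = {x. to_nat x < n}"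
definition FF :: "nat \<Rightarrow> 'v::countable set set" where "FF n = {e \<in> edges. e \<subseteq> VV n}"
definition KF :: "'v set set \<Rightarrow> ('v set \<Rightarrow> bool) \<Rightarrow> 'v \<Rightarrow> 'v set" where
  "KF F \<omega> u = {x. conn {e\<in>F. \<omega> e} u x}"

lemma VV_finite: "finite (VV n)"
proof -
  have "VV n \<subseteq> from_nat ` {..<n}"
  proof
    fix x assume "x \<in> VV n"
    then show "x \<in> from_nat ` {..<n}" unfolding VV_def by (intro image_eqI[of _ _ "to_nat x"]) auto
  qed
  then show ?thesis by (rule finite_subset) simp
qed

lemma FF_finite: "finite (FF n)"
  unfolding FF_def by (rule finite_subset[of _ "Pow (VV n)"]) (auto simp: VV_finite)

lemma FF_edges: "FF n \<subseteq> edges" unfolding FF_def by auto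

lemma FF_noe: "{} \<notin> FF n" unfolding FF_def edges_def by auto

lemma FF_union: "\<Union>(FF n) \<subseteq> VV n" unfolding FF_def by auto

lemma FF_mono: "n \<le> m \<Longrightarrow> FF n \<subseteq> FF m" unfolding FF_def VV_def by auto

lemma conn_open: "conn {e\<in>F. \<omega> e} a b \<Longrightarrow> (open_edge \<omega>)\<^sup>*\<^sup>* a b"
proof (induction rule: rtranclp_induct)
  case (step y z)
  then have "open_edge \<omega> y z" unfolding cedge_def open_edge_def by auto
  with step show ?case by (meson rtranclp.rtrancl_into_rtrancl)
qed simp

lemma KF_sub: "KF F \<omega> u \<subseteq> cluster \<omega> u"
  unfolding KF_def cluster_def by (auto intro: conn_open)

lemma KF_mono:
  assumes "F \<subseteq> F'" shows "KF F \<omega> u \<subseteq> KF F' \<omega> u"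
proof -
  have s: "{e\<in>F. \<omega> e} \<subseteq> {e\<in>F'. \<omega> e}" using assms by auto
  show ?thesis unfolding KF_def by (auto intro: conn_mono[OF _ s])
qed

lemma KF_exh:
  assumes "(open_edge \<omega>)\<^sup>*\<^sup>* u x"
  shows "\<exists>n. x \<in> KF (FF n) \<omega> u"
  using assms
proof (induction rule: rtranclp_induct)
  case base then show ?case unfolding KF_def by auto
next
  case (step y z)
  then obtain n where n: "conn {e\<in>FF n. \<omega> e} u y" unfolding KF_def by auto
  define n' where "n' = max n (Suc (max (to_nat y) (to_nat z)))"
  have yz: "y \<noteq> z" "\<omega> {y, z}" using step(2) unfolding open_edge_def by auto
  have "{y, z} \<in> FF n'" unfolding FF_def VV_def edges_def n'_def using yz by auto
  then have "conn {e\<in>FF n'. \<omega> e} y z" using yz by (intro conn_edge) auto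
  moreover have "conn {e\<in>FF n'. \<omega> e} u y"
    using n FF_mono[of n n'] unfolding n'_def by (rule_tac conn_mono) auto
  ultimately show ?case unfolding KF_def using conn_trans by (metis mem_Collect_eq)
qed

lemma KF_finite: "finite (KF (FF n) \<omega> u)"
proof -
  have "KF (FF n) \<omega> u \<subseteq> insert u (VV n)"
    unfolding KF_def using conn_vert FF_union by fastforce
  then show ?thesis using VV_finite finite_subset by blast
qed

lemma csize_sup:
  assumes "1 \<le> p"
  shows "cluster_size \<omega> u ^ p = (SUP n. ennreal (real (card (KF (FF n) \<omega> u)) ^ p))"
  unfolding cluster_size_def
proof (rule sup_card_pow[OF _ KF_sub KF_finite _ assms])
  show "\<And>n m. n \<le> m \<Longrightarrow> KF (FF n) \<omega> u \<subseteq> KF (FF m) \<omega> u" by (intro KF_mono FF_mono)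
  show "\<And>x. x \<in> cluster \<omega> u \<Longrightarrow> \<exists>n. x \<in> KF (FF n) \<omega> u" unfolding cluster_def using KF_exh by blast
qed

lemma KF_meas:
  "(\<lambda>\<omega>. ennreal (real (card (KF (FF n) \<omega> u)) ^ p)) \<in> borel_measurable (perc \<beta> J)"
  unfolding KF_def by (rule transfer_meas[OF FF_finite FF_edges, of "\<lambda>S. real (card {x. conn S u x}) ^ p"])

lemma csize_meas:
  fixes u :: "'v::countable"
  assumes "1 \<le> p"
  shows "(\<lambda>\<omega>. cluster_size \<omega> u ^ p) \<in> borel_measurable (perc \<beta> J)"
  unfolding csize_sup[OF assms] by (rule borel_measurable_SUP, simp, rule KF_meas)

lemma KF_incseq: "incseq (\<lambda>n \<omega>. ennreal (real (card (KF (FF n) \<omega> u)) ^ p))"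
proof (rule incseq_SucI, rule le_funI)
  fix n \<omega>
  have "card (KF (FF n) \<omega> u) \<le> card (KF (FF (Suc n)) \<omega> u)"
    by (rule card_mono[OF KF_finite KF_mono[OF FF_mono]]) simp
  then show "ennreal (real (card (KF (FF n) \<omega> u)) ^ p) \<le> ennreal (real (card (KF (FF (Suc n)) \<omega> u)) ^ p)"
    by (intro ennreal_leI power_mono) auto
qed

lemma int_csize_SUP:
  assumes "1 \<le> p"
  shows "(\<integral>\<^sup>+ \<omega>. cluster_size \<omega> u ^ p \<partial>perc \<beta> J)
     = (SUP n. \<integral>\<^sup>+ \<omega>. ennreal (real (card (KF (FF n) \<omega> u)) ^ p) \<partial>perc \<beta> J)"
  unfolding csize_sup[OF assms]
  by (rule nn_integral_monotone_convergence_SUP[OF KF_incseq KF_meas])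

lemma card_le_csize:
  "ennreal (real (card (KF F \<omega> u \<inter> X)) ^ p) \<le> cluster_size \<omega> u ^ p"
proof (cases "finite (cluster \<omega> u)")
  case True
  have "card (KF F \<omega> u \<inter> X) \<le> card (cluster \<omega> u)"
    using KF_sub[of F \<omega> u] True by (intro card_mono) auto
  then show ?thesis using True unfolding cluster_size_def
    by (simp add: ennreal_power[symmetric] power_mono)
next
  case False
  then show ?thesis unfolding cluster_size_def
    by (cases p) (simp_all add: power_eq_top_ennreal)
qed

lemma rtranclp_bij:
  assumes bij: "bij \<phi>" and R: "\<And>a b. R a b \<longleftrightarrow> Q (\<phi> a) (\<phi> b)"
  shows "R\<^sup>*\<^sup>* a b \<longleftrightarrow> Q\<^sup>*\<^sup>* (\<phi> a) (\<phi> b)"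
proof
  assume "R\<^sup>*\<^sup>* a b"
  then show "Q\<^sup>*\<^sup>* (\<phi> a) (\<phi> b)"
  proof (induction rule: rtranclp_induct)
    case (step y z)
    then show ?case using R by (meson rtranclp.rtrancl_into_rtrancl)
  qed simp
next
  have inv1: "\<phi> (inv \<phi> c) = c" for c using bij by (simp add: bij_def surj_f_inv_f)
  have inv2: "inv \<phi> (\<phi> c) = c" for c using bij by (simp add: bij_def inv_f_f)
  have "Q\<^sup>*\<^sup>* (\<phi> a) c \<Longrightarrow> R\<^sup>*\<^sup>* a (inv \<phi> c)" for c
  proof (induction rule: rtranclp_induct)
    case base then show ?case by (simp add: inv2)
  next
    case (step y z)
    have "R (inv \<phi> y) (inv \<phi> z)" using R step(2) by (simp add: inv1)
    then show ?case using step(3) by (meson rtranclp.rtrancl_into_rtrancl)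
  qed
  then show "Q\<^sup>*\<^sup>* (\<phi> a) (\<phi> b) \<Longrightarrow> R\<^sup>*\<^sup>* a b" using inv2 by metis
qed

lemma invariance:
  fixes u v :: "'v::countable"
  assumes wg: "weighted_graph J" and tr: "transitive_wgraph J" and b: "0 \<le> \<beta>" and j: "1 \<le> j"
  shows "(\<integral>\<^sup>+ \<omega>. cluster_size \<omega> u ^ j \<partial>perc \<beta> J) = (\<integral>\<^sup>+ \<omega>. cluster_size \<omega> v ^ j \<partial>perc \<beta> J)"
proof -
  obtain \<phi> where phi: "bij \<phi>" "\<And>a b. J (\<phi> a) (\<phi> b) = J a b" "\<phi> u = v"
    using tr unfolding transitive_wgraph_def by blast
  have inj: "inj \<phi>" using phi(1) by (simp add: bij_def)
  define t where "t e = \<phi> ` e" for e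
  define T where "T \<omega> = (\<lambda>e\<in>edges. \<omega> (t e))" for \<omega> :: "'v set \<Rightarrow> bool"
  have t_pair: "t {a, b} = {\<phi> a, \<phi> b}" for a b unfolding t_def by simp
  have inj_t: "inj_on t edges"
    unfolding t_def using inj by (simp add: inj_on_def inj_image_eq_iff)
  have t_edges: "t \<in> edges \<rightarrow> edges"
  proof
    fix e :: "'v set" assume "e \<in> edges"
    then obtain x y where xy: "x \<noteq> y" "e = {x, y}" unfolding edges_iff by blast
    have ne: "\<phi> x \<noteq> \<phi> y" using xy(1) inj by (simp add: inj_eq)
    show "t e \<in> edges" unfolding edges_iff xy(2) t_pair using ne by blast
  qed
  have MM_t: "MM \<beta> J (t e) = MM \<beta> J e" if e: "e \<in> edges" for e
  proof -
    obtain x y where xy: "x \<noteq> y" "e = {x, y}" using e unfolding edges_iff by blast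
    have "\<phi> x \<noteq> \<phi> y" using xy(1) inj by (simp add: inj_eq)
    then have "edge_weight J (t e) = edge_weight J e"
      unfolding xy t_pair using edge_weight_eq[OF wg] xy phi(2) by simp
    then show ?thesis unfolding MM_def qq_def by simp
  qed
  have P: "PiM edges (\<lambda>e. MM \<beta> J (t e)) = perc \<beta> J"
    unfolding perc_eq by (rule PiM_cong) (auto simp: MM_t)
  have D0: "distr (PiM edges (MM \<beta> J)) (PiM edges (\<lambda>e. MM \<beta> J (t e))) (\<lambda>\<omega>. \<lambda>n\<in>edges. \<omega> (t n))
      = PiM edges (\<lambda>e. MM \<beta> J (t e))"
    by (rule distr_PiM_reindex) (auto simp: prob_MM inj_t t_edges)
  have D: "distr (perc \<beta> J) (perc \<beta> J) T = perc \<beta> J"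
    using D0 unfolding P perc_eq[symmetric] T_def .
  have Tm: "T \<in> measurable (perc \<beta> J) (perc \<beta> J)"
  proof -
    have "(\<lambda>\<omega>. \<lambda>e\<in>edges. \<omega> (t e)) \<in> measurable (perc \<beta> J) (PiM edges (\<lambda>e. MM \<beta> J (t e)))"
    proof (rule measurable_restrict)
      fix e :: "'v set" assume e: "e \<in> edges"
      have "(\<lambda>\<omega>. \<omega> (t e)) \<in> measurable (PiM edges (MM \<beta> J)) (MM \<beta> J (t e))"
        by (rule measurable_component_singleton) (use t_edges e in auto)
      then show "(\<lambda>\<omega>. \<omega> (t e)) \<in> measurable (perc \<beta> J) (MM \<beta> J (t e))" unfolding perc_eq .
    qed
    then show ?thesis unfolding P T_def .
  qed
  have oe: "open_edge (T \<omega>) a b \<longleftrightarrow> open_edge \<omega> (\<phi> a) (\<phi> b)" for \<omega> a b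
  proof (cases "a = b")
    case False
    then have "{a, b} \<in> edges" unfolding edges_iff by blast
    moreover have "\<phi> a \<noteq> \<phi> b" using False inj by (simp add: inj_eq)
    ultimately show ?thesis unfolding open_edge_def T_def using False t_pair by simp
  qed (simp add: open_edge_def)
  have cl: "cluster \<omega> v = \<phi> ` cluster (T \<omega>) u" for \<omega>
  proof -
    have mem: "x \<in> cluster (T \<omega>) u \<longleftrightarrow> \<phi> x \<in> cluster \<omega> v" for x
      unfolding cluster_def using rtranclp_bij[where R="open_edge (T \<omega>)" and Q="open_edge \<omega>", OF phi(1) oe[of \<omega>], of u x] phi(3) by simp
    have inv1: "\<phi> (inv \<phi> y) = y" for y using phi(1) by (simp add: bij_def surj_f_inv_f)
    show ?thesis
    proof (rule set_eqI)
      fix y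
      show "y \<in> cluster \<omega> v \<longleftrightarrow> y \<in> \<phi> ` cluster (T \<omega>) u"
      proof
        assume "y \<in> cluster \<omega> v"
        then have "inv \<phi> y \<in> cluster (T \<omega>) u" using mem[of "inv \<phi> y"] inv1[of y] by simp
        then show "y \<in> \<phi> ` cluster (T \<omega>) u" using inv1[of y] by (metis image_eqI)
      next
        assume "y \<in> \<phi> ` cluster (T \<omega>) u"
        then obtain x where "x \<in> cluster (T \<omega>) u" "y = \<phi> x" by blast
        then show "y \<in> cluster \<omega> v" using mem by simp
      qed
    qed
  qed
  have cs: "cluster_size (T \<omega>) u = cluster_size \<omega> v" for \<omega>
  proof -
    have inj': "inj_on \<phi> (cluster (T \<omega>) u)" by (rule inj_on_subset[OF inj]) simp
    show ?thesis unfolding cluster_size_def cl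
      using finite_image_iff[OF inj'] card_image[OF inj'] by simp
  qed
  have "(\<integral>\<^sup>+ \<omega>. cluster_size \<omega> u ^ j \<partial>perc \<beta> J)
      = (\<integral>\<^sup>+ \<omega>. cluster_size \<omega> u ^ j \<partial>distr (perc \<beta> J) (perc \<beta> J) T)"
    unfolding D ..
  also have "\<dots> = (\<integral>\<^sup>+ \<omega>. cluster_size (T \<omega>) u ^ j \<partial>perc \<beta> J)"
    by (rule nn_integral_distr[OF Tm]) (unfold D, rule csize_meas[OF j])
  also have "\<dots> = (\<integral>\<^sup>+ \<omega>. cluster_size \<omega> v ^ j \<partial>perc \<beta> J)"
    unfolding cs ..
  finally show ?thesis .
qed

lemma ceil_half: "1 \<le> p \<Longrightarrow> nat \<lceil>real (p - 1) / 2\<rceil> = p div 2"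
proof (cases "even p")
  case True
  assume p: "1 \<le> p"
  then obtain m where m: "p = 2 * m" "1 \<le> m" using True by (auto elim!: evenE)
  have "\<lceil>real (p - 1) / 2\<rceil> = int m"
    unfolding ceiling_eq_iff using m by (auto simp: of_nat_diff)
  then show ?thesis using m by simp
next
  case False
  assume p: "1 \<le> p"
  then obtain m where m: "p = 2 * m + 1" using False by (auto elim!: oddE)
  have "\<lceil>real (p - 1) / 2\<rceil> = int m"
    unfolding ceiling_eq_iff using m by auto
  then show ?thesis using m by simp
qed
lemma e0: "k \<le> p div 2 \<Longrightarrow> 2 \<le> (p::nat) \<Longrightarrow> 2 * p - 1 - 3 * k = 0 \<Longrightarrow> p = 2 \<and> k = 1"
proof -
  assume a: "k \<le> p div 2" "2 \<le> p" "2 * p - 1 - 3 * k = 0"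
  have "2 * (p div 2) \<le> p" by simp
  then have "2 * k \<le> p" using a(1) by linarith
  then show ?thesis using a(2,3) by linarith
qed

lemma csize_ge1: "1 \<le> cluster_size \<omega> v"
proof (cases "finite (cluster \<omega> v)")
  case True
  have "v \<in> cluster \<omega> v" unfolding cluster_def by simp
  then have "1 \<le> card (cluster \<omega> v)" using True by (metis One_nat_def Suc_leI card_gt_0_iff empty_iff)
  then show ?thesis using True unfolding cluster_size_def by simp
qed (simp add: cluster_size_def)

lemma int_ge1:
  assumes "1 \<le> j"
  shows "1 \<le> (\<integral>\<^sup>+ \<omega>. cluster_size \<omega> v ^ j \<partial>perc \<beta> J)"
proof -
  interpret prob_space "perc \<beta> J" by (rule prob_perc)
  have "(\<integral>\<^sup>+ \<omega>. 1 \<partial>perc \<beta> J) \<le> (\<integral>\<^sup>+ \<omega>. cluster_size \<omega> v ^ j \<partial>perc \<beta> J)"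
    by (rule nn_integral_mono, rule one_le_power, rule csize_ge1)
  moreover have "(\<integral>\<^sup>+ \<omega>. 1 \<partial>perc \<beta> J) = 1" by (simp add: emeasure_space_1)
  ultimately show ?thesis by simp
qed

lemma fin_bound:
  fixes J :: "'v::countable \<Rightarrow> 'v \<Rightarrow> real" and v :: 'v
  assumes wg: "weighted_graph J" and tr: "transitive_wgraph J" and b: "0 \<le> \<beta>"
    and p: "1 \<le> p" and k: "k \<le> p div 2"
    and chi: "(\<integral>\<^sup>+ \<omega>. cluster_size \<omega> v \<partial>perc \<beta> J) = ennreal chr" "0 \<le> chr"
    and m2: "k = 0 \<or> (\<integral>\<^sup>+ \<omega>. cluster_size \<omega> v ^ 2 \<partial>perc \<beta> J) \<noteq> \<top>"
  shows "(\<integral>\<^sup>+ \<omega>. ennreal (real (card (KF (FF n) \<omega> v)) ^ p) \<partial>perc \<beta> J)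
     \<le> ennreal (real (odd_dfact p)) * (\<integral>\<^sup>+ \<omega>. cluster_size \<omega> v ^ 2 \<partial>perc \<beta> J) ^ k * ennreal chr ^ (2 * p - 1 - 3 * k)"
proof -
  define q where "q = qq \<beta> J"
  define F where "F = (FF n :: 'v set set)"
  define X where "X = insert v (VV n)"
  define M2 where "M2 = (\<integral>\<^sup>+ \<omega>. cluster_size \<omega> v ^ 2 \<partial>perc \<beta> J)"
  interpret fv q F X
  proof unfold_locales
    show "finite F" unfolding F_def by (rule FF_finite)
    show "qok q F" unfolding q_def F_def by (rule qok_perc[OF wg b FF_edges])
    show "{} \<notin> F" unfolding F_def by (rule FF_noe)
    show "finite X" unfolding X_def using VV_finite by simp
    show "\<Union>F \<subseteq> X" unfolding F_def X_def using FF_union[of n] by blast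
  qed
  define m2r where "m2r = (if M2 = \<top> then (\<Sum>u\<in>X. \<Sum>a\<in>X. \<Sum>b\<in>X. Pr q F (Blob u a b)) else enn2real M2)"
  have KX: "{x. conn S u x} \<inter> X = {x. conn S u x}" if SF: "S \<subseteq> F" and uX: "u \<in> X" for S u
  proof -
    have "x \<in> X" if c: "conn S u x" for x
    proof -
      have "x = u \<or> x \<in> \<Union>S" using conn_vert[OF c] .
      moreover have "\<Union>S \<subseteq> X" using SF FF_union[of n] unfolding F_def X_def by blast
      ultimately show ?thesis using uX by blast
    qed
    then show ?thesis by auto
  qed
  have EEj: "ennreal (EE q F (\<lambda>S. real (card ({x. conn S u x} \<inter> X)) ^ j))
      \<le> (\<integral>\<^sup>+ \<omega>. cluster_size \<omega> v ^ j \<partial>perc \<beta> J)" if u: "u \<in> X" and j: "1 \<le> j" for u j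
  proof -
    have "ennreal (EE q F (\<lambda>S. real (card ({x. conn S u x} \<inter> X)) ^ j))
        = (\<integral>\<^sup>+ \<omega>. ennreal (real (card ({x. conn {e\<in>F. \<omega> e} u x} \<inter> X)) ^ j) \<partial>perc \<beta> J)"
      unfolding q_def F_def by (rule transfer[symmetric, OF wg b FF_finite FF_edges]) simp
    also have "\<dots> \<le> (\<integral>\<^sup>+ \<omega>. cluster_size \<omega> u ^ j \<partial>perc \<beta> J)"
      by (rule nn_integral_mono) (rule card_le_csize[unfolded KF_def])
    also have "\<dots> = (\<integral>\<^sup>+ \<omega>. cluster_size \<omega> v ^ j \<partial>perc \<beta> J)"
      by (rule invariance[OF wg tr b j])
    finally show ?thesis .
  qed
  have Pr0: "0 \<le> Pr q F A" for A by (rule Pr_ge0)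
  interpret fvb q F X chr m2r
  proof unfold_locales
    show "0 \<le> chr" by (rule chi(2))
    show "0 \<le> m2r" unfolding m2r_def by (auto intro!: sum_nonneg Pr0)
  next
    fix u assume u: "u \<in> X"
    have "ennreal (\<Sum>y\<in>X. Pr q F (\<lambda>S. conn S u y)) \<le> ennreal chr"
      unfolding sum_conn_EE using EEj[OF u, of 1] chi(1) by simp
    then show "(\<Sum>y\<in>X. Pr q F (\<lambda>S. conn S u y)) \<le> chr" using chi(2) by (simp add: ennreal_le_iff)
  next
    fix u assume u: "u \<in> X"
    show "(\<Sum>a\<in>X. \<Sum>b\<in>X. Pr q F (Blob u a b)) \<le> m2r"
    proof (cases "M2 = \<top>")
      case True
      have "(\<Sum>a\<in>X. \<Sum>b\<in>X. Pr q F (Blob u a b)) \<le> (\<Sum>u\<in>X. \<Sum>a\<in>X. \<Sum>b\<in>X. Pr q F (Blob u a b))"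
        by (rule member_le_sum[OF u]) (auto intro!: sum_nonneg Pr0 simp: finX)
      then show ?thesis using True unfolding m2r_def by simp
    next
      case False
      have "ennreal (\<Sum>a\<in>X. \<Sum>b\<in>X. Pr q F (Blob u a b)) \<le> M2"
        unfolding sum_blob_EE M2_def using EEj[OF u, of 2] by simp
      also have "M2 = ennreal (enn2real M2)" using False by (simp add: ennreal_enn2real_if)
      finally show ?thesis using False unfolding m2r_def by (simp add: ennreal_le_iff)
    qed
  qed
  have "(\<integral>\<^sup>+ \<omega>. ennreal (real (card (KF (FF n) \<omega> v)) ^ p) \<partial>perc \<beta> J)
      = (\<integral>\<^sup>+ \<omega>. ennreal (real (card ({x. conn {e\<in>F. \<omega> e} v x} \<inter> X)) ^ p) \<partial>perc \<beta> J)"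
  proof (rule nn_integral_cong)
    fix \<omega>
    have "{x. conn {e\<in>F. \<omega> e} v x} \<inter> X = {x. conn {e\<in>F. \<omega> e} v x}" by (rule KX) (auto simp: X_def)
    then show "ennreal (real (card (KF (FF n) \<omega> v)) ^ p)
        = ennreal (real (card ({x. conn {e\<in>F. \<omega> e} v x} \<inter> X)) ^ p)"
      unfolding KF_def F_def by simp
  qed
  also have "\<dots> = ennreal (EE q F (\<lambda>S. real (card ({x. conn S v x} \<inter> X)) ^ p))"
    unfolding q_def F_def by (rule transfer[OF wg b FF_finite FF_edges]) simp
  also have "\<dots> \<le> ennreal (real (odd_dfact p) * m2r ^ k * chr ^ (2 * p - 1 - 3 * k))"
    by (rule ennreal_leI, rule fv_final[OF _ p k]) (simp add: X_def)
  also have "\<dots> = ennreal (real (odd_dfact p)) * ennreal m2r ^ k * ennreal chr ^ (2 * p - 1 - 3 * k)"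
    using chi(2) M20 by (simp add: ennreal_mult ennreal_power)
  also have "ennreal m2r ^ k = M2 ^ k"
  proof (cases "k = 0")
    case False
    then have "M2 \<noteq> \<top>" using m2 unfolding M2_def by simp
    then show ?thesis unfolding m2r_def by (simp add: ennreal_enn2real_if)
  qed simp
  finally show ?thesis unfolding M2_def .
qed

theorem lemma4p16:
  fixes J :: "'v::countable \<Rightarrow> 'v \<Rightarrow> real" and \<beta> :: real and v :: 'v and p k :: nat
  assumes "weighted_graph J" and "transitive_wgraph J" and "\<beta> > 0"
    and "p \<ge> 2" and "k \<le> nat \<lceil>real (p - 1) / 2\<rceil>"
  shows "(\<integral>\<^sup>+ \<omega>. cluster_size \<omega> v ^ p \<partial>perc \<beta> J)
     \<le> ennreal (real (odd_dfact p))
        * (\<integral>\<^sup>+ \<omega>. cluster_size \<omega> v ^ 2 \<partial>perc \<beta> J) ^ k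
        * (\<integral>\<^sup>+ \<omega>. cluster_size \<omega> v \<partial>perc \<beta> J) ^ (2 * p - 1 - 3 * k)"
proof -
  have wg: "weighted_graph J" and tr: "transitive_wgraph J" and b: "0 \<le> \<beta>" using assms by auto
  have p: "1 \<le> p" using assms by simp
  have k: "k \<le> p div 2" using assms(5) ceil_half[OF p] by simp
  define chi where "chi = (\<integral>\<^sup>+ \<omega>. cluster_size \<omega> v \<partial>perc \<beta> J)"
  define M2 where "M2 = (\<integral>\<^sup>+ \<omega>. cluster_size \<omega> v ^ 2 \<partial>perc \<beta> J)"
  define e where "e = 2 * p - 1 - 3 * k"
  have chi1: "1 \<le> chi" unfolding chi_def using int_ge1[where j=1 and v=v and \<beta>=\<beta> and J=J] by simp
  have M21: "1 \<le> M2" unfolding M2_def using int_ge1[where j=2 and v=v and \<beta>=\<beta> and J=J] by simp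
  have c1: "1 \<le> ennreal (real (odd_dfact p))" using odd_dfact_pos[of p] by simp
  show ?thesis
    unfolding chi_def[symmetric] M2_def[symmetric] e_def[symmetric]
  proof (cases "e = 0")
    case True
    then have "p = 2 \<and> k = 1" using e0[OF k assms(4)] unfolding e_def by simp
    then show "(\<integral>\<^sup>+ \<omega>. cluster_size \<omega> v ^ p \<partial>perc \<beta> J) \<le> ennreal (real (odd_dfact p)) * M2 ^ k * chi ^ e"
      using True unfolding M2_def by simp
  next
    case eF: False
    show "(\<integral>\<^sup>+ \<omega>. cluster_size \<omega> v ^ p \<partial>perc \<beta> J) \<le> ennreal (real (odd_dfact p)) * M2 ^ k * chi ^ e"
    proof (cases "chi = \<top> \<or> (k \<noteq> 0 \<and> M2 = \<top>)")
      case True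
      have nz1: "ennreal (real (odd_dfact p)) \<noteq> 0" using c1 by auto
      have nz2: "M2 ^ k \<noteq> 0" using M21 by (auto simp: power_eq_0_iff)
      have nz3: "chi ^ e \<noteq> 0" using chi1 by (auto simp: power_eq_0_iff)
      have "ennreal (real (odd_dfact p)) * M2 ^ k * chi ^ e = \<top>"
        using True eF nz1 nz2 nz3 by (auto simp: power_eq_top_ennreal ennreal_mult_eq_top_iff)
      then show ?thesis by simp
    next
      case False
      then have cf: "chi \<noteq> \<top>" and mf: "k = 0 \<or> M2 \<noteq> \<top>" by auto
      obtain chr where chr: "chi = ennreal chr" "0 \<le> chr" using cf by (cases chi) auto
      have chi': "(\<integral>\<^sup>+ \<omega>. cluster_size \<omega> v \<partial>perc \<beta> J) = ennreal chr" using chr(1) unfolding chi_def .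
      have m2': "k = 0 \<or> (\<integral>\<^sup>+ \<omega>. cluster_size \<omega> v ^ 2 \<partial>perc \<beta> J) \<noteq> \<top>" using mf unfolding M2_def .
      have "(\<integral>\<^sup>+ \<omega>. cluster_size \<omega> v ^ p \<partial>perc \<beta> J)
          = (SUP n. \<integral>\<^sup>+ \<omega>. ennreal (real (card (KF (FF n) \<omega> v)) ^ p) \<partial>perc \<beta> J)"
        by (rule int_csize_SUP[OF p])
      also have "\<dots> \<le> ennreal (real (odd_dfact p)) * M2 ^ k * chi ^ e"
      proof (rule SUP_least)
        fix n
        show "(\<integral>\<^sup>+ \<omega>. ennreal (real (card (KF (FF n) \<omega> v)) ^ p) \<partial>perc \<beta> J)
            \<le> ennreal (real (odd_dfact p)) * M2 ^ k * chi ^ e"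
          using fin_bound[OF wg tr b p k chi' chr(2) m2', of n] unfolding M2_def e_def chr(1) by simp
      qed
      finally show ?thesis .
    qed
  qed
qed

end
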